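(* Let $t\ge3$ be an integer. Every $t$-mansion is $(2P_3,C_4,C_6,C_7,T_0)$-free and contains an induced $t$-pentagon. Moreover, every $t$-mansion is anticonnected and contains no simplicial and no universal vertices.
   Context: Graphs are finite, simple, nonnull. A graph is $(H_1,\dots,H_m)$-free if it has no induced subgraph isomorphic to any $H_i$. $P_k$, $C_k$ are the path and cycle on $k$ vertices; $2P_3$ is two disjoint copies of $P_3$. $T_0$ is the graph with vertices $p,q,u_0,u_1,u_2,u_3,w_1,w_2,w_3$ and edges $pq,pu_0,pu_2,pu_3,qu_1,qu_2,qu_3,u_0w_1,u_1w_1,u_2w_2,u_3w_3,w_1w_2,w_1w_3,w_2w_3$. For $t\ge3$ the $t$-pentagon is the graph on vertices $a,b_1,\dots,b_t,c_1,\dots,c_t$ where $a$ is adjacent to every $b_i$ and to no $c_i$, $\{b_1,\dots,b_t\}$ is stable, $\{c_1,\dots,c_t\}$ is a clique, and $b_ic_j$ is an edge iff $i=j$. A graph is anticonnected if its complement is connected. A vertex is simplicial if its neighbours form a (possibly empty) clique, universal if adjacent to all other vertices. For disjoint vertex sets $X,Y$, $X$ is complete (anticomplete) to $Y$ if every vertex of $X$ is adjacent (nonadjacent) to every vertex of $Y$. $t$-villa: a graph whose vertex set partitions into nonempty cliques $A,B_1,\dots,B_t,C_1,\dots,C_t$ such that $A$ is complete to $B_1\cup\dots\cup B_t$ and anticomplete to $C_1\cup\dots\cup C_t$; the $B_i$ are pairwise anticomplete; the $C_i$ are pairwise complete; $B_i$ is anticomplete to $C_j$ for $i\ne j$; each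 $B_i$ can be ordered $b^i_1,\dots,b^i_{r_i}$ with $\emptyset\ne N(b^i_{r_i})\cap C_i\subseteq\dots\subseteq N(b^i_1)\cap C_i=C_i$; this is a $t$-villa partition $(A;B_1,\dots,B_t;C_1,\dots,C_t)$. $t$-mansion: a graph $Q$ whose vertex set partitions into cliques $A,B_1,\dots,B_t,C_1,\dots,C_t,F,X,Y$, with $A,B_i,C_i,F$ nonempty ($X,Y$ possibly empty), such that $Q[A\cup B_1\cup\dots\cup B_t\cup C_1\cup\dots\cup C_t]$ is a $t$-villa with $t$-villa partition $(A;B_1,\dots,B_t;C_1,\dots,C_t)$; there is $j^*\in\{1,\dots,t\}$ such that $F$ is complete to $A$, to $\bigcup_{i\ne j^*}B_i$ and to $\bigcup_{i\ne j^*}C_i$ and anticomplete to $B_{j^*}\cup C_{j^*}$, $B_{j^*}$ is complete to $C_{j^*}$, and $X$ is complete to $A\cup B_{j^*}$ and anticomplete to $\bigcup_{i\ne j^*}B_i$ and to $C_1\cup\dots\cup C_t$; $F$ is complete to $X\cup Y$; $X$ is anticomplete to $Y$; $Y$ is complete to $C_1\cup\dots\cup C_t$ and anticomplete to $A\cup B_1\cup\dots\cup B_t$. *)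

theory Defs
  imports Main
begin

definition graph :: "'a set \<Rightarrow> ('a \<Rightarrow> 'a \<Rightarrow> bool) \<Rightarrow> bool" where
  "graph V E \<longleftrightarrow> finite V \<and> V \<noteq> {} \<and>
     (\<forall>x y. E x y \<longrightarrow> x \<in> V \<and> y \<in> V) \<and>
     (\<forall>x y. E x y \<longrightarrow> E y x) \<and> (\<forall>x. \<not> E x x)"

definition has_induced :: "'a set \<Rightarrow> ('a \<Rightarrow> 'a \<Rightarrow> bool) \<Rightarrow> 'b set \<Rightarrow> ('b \<Rightarrow> 'b \<Rightarrow> bool) \<Rightarrow> bool" where
  "has_induced V E VH EH \<longleftrightarrow>
     (\<exists>f. inj_on f VH \<and> f ` VH \<subseteq> V \<and> (\<forall>x\<in>VH. \<forall>y\<in>VH. E (f x) (f y) \<longleftrightarrow> EH x y))"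

definition cycV :: "nat \<Rightarrow> nat set" where "cycV k = {0..<k}"
definition cycE :: "nat \<Rightarrow> nat \<Rightarrow> nat \<Rightarrow> bool" where
  "cycE k x y \<longleftrightarrow> x < k \<and> y < k \<and> (y = (x + 1) mod k \<or> x = (y + 1) mod k) \<and> x \<noteq> y"

definition twoP3V :: "nat set" where "twoP3V = {0..<6}"
definition twoP3E :: "nat \<Rightarrow> nat \<Rightarrow> bool" where
  "twoP3E x y \<longleftrightarrow> {x, y} \<in> {{0,1},{1,2},{3,4},{4,5}}"

text \<open>T_0 with p=0, q=1, u0=2, u1=3, u2=4, u3=5, w1=6, w2=7, w3=8.\<close>
definition T0V :: "nat set" where "T0V = {0..<9}"
definition T0E :: "nat \<Rightarrow> nat \<Rightarrow> bool" where
  "T0E x y \<longleftrightarrow> {x, y} \<in> {{0,1},{0,2},{0,4},{0,5},{1,3},{1,4},{1,5},{2,6},{3,6},{4,7},{5,8},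
                         {6,7},{6,8},{7,8}}"

text \<open>t-pentagon: a = (0,0), b_i = (1,i), c_i = (2,i), for 1 \<le> i \<le> t.\<close>
definition pentV :: "nat \<Rightarrow> (nat \<times> nat) set" where
  "pentV t = {(0,0)} \<union> {(1,i) | i. 1 \<le> i \<and> i \<le> t} \<union> {(2,i) | i. 1 \<le> i \<and> i \<le> t}"
definition pentE :: "nat \<Rightarrow> nat \<times> nat \<Rightarrow> nat \<times> nat \<Rightarrow> bool" where
  "pentE t x y \<longleftrightarrow> x \<in> pentV t \<and> y \<in> pentV t \<and>
     ((x = (0,0) \<and> fst y = 1) \<or> (y = (0,0) \<and> fst x = 1) \<or>
      (fst x = 2 \<and> fst y = 2 \<and> snd x \<noteq> snd y) \<or>
      ({fst x, fst y} = {1,2} \<and> snd x = snd y))"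

definition clique :: "('a \<Rightarrow> 'a \<Rightarrow> bool) \<Rightarrow> 'a set \<Rightarrow> bool" where
  "clique E S \<longleftrightarrow> (\<forall>x\<in>S. \<forall>y\<in>S. x \<noteq> y \<longrightarrow> E x y)"
definition complete_to :: "('a \<Rightarrow> 'a \<Rightarrow> bool) \<Rightarrow> 'a set \<Rightarrow> 'a set \<Rightarrow> bool" where
  "complete_to E X Y \<longleftrightarrow> (\<forall>x\<in>X. \<forall>y\<in>Y. E x y)"
definition anticomplete_to :: "('a \<Rightarrow> 'a \<Rightarrow> bool) \<Rightarrow> 'a set \<Rightarrow> 'a set \<Rightarrow> bool" where
  "anticomplete_to E X Y \<longleftrightarrow> (\<forall>x\<in>X. \<forall>y\<in>Y. \<not> E x y)"

definition nbhd :: "('a \<Rightarrow> 'a \<Rightarrow> bool) \<Rightarrow> 'a \<Rightarrow> 'a set" where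
  "nbhd E x = {y. E x y}"

definition is_partition :: "'a set \<Rightarrow> 'a set list \<Rightarrow> bool" where
  "is_partition W Ps \<longleftrightarrow> \<Union>(set Ps) = W \<and>
     (\<forall>i<length Ps. \<forall>j<length Ps. i \<noteq> j \<longrightarrow> Ps ! i \<inter> Ps ! j = {})"

definition villa_partition :: "'a set \<Rightarrow> ('a \<Rightarrow> 'a \<Rightarrow> bool) \<Rightarrow> nat \<Rightarrow> 'a set \<Rightarrow> (nat \<Rightarrow> 'a set) \<Rightarrow> (nat \<Rightarrow> 'a set) \<Rightarrow> bool" where
  "villa_partition W E t A B C \<longleftrightarrow>
     is_partition W ([A] @ map B [1..<t+1] @ map C [1..<t+1]) \<and>
     A \<noteq> {} \<and> clique E A \<and>
     (\<forall>i\<in>{1..t}. B i \<noteq> {} \<and> C i \<noteq> {} \<and> clique E (B i) \<and> clique E (C i)) \<and>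
     complete_to E A (\<Union>i\<in>{1..t}. B i) \<and> anticomplete_to E A (\<Union>i\<in>{1..t}. C i) \<and>
     (\<forall>i\<in>{1..t}. \<forall>j\<in>{1..t}. i \<noteq> j \<longrightarrow>
        anticomplete_to E (B i) (B j) \<and> complete_to E (C i) (C j) \<and> anticomplete_to E (B i) (C j)) \<and>
     (\<forall>i\<in>{1..t}. \<exists>bs. distinct bs \<and> set bs = B i \<and>
        nbhd E (hd bs) \<inter> C i = C i \<and> nbhd E (last bs) \<inter> C i \<noteq> {} \<and>
        (\<forall>k. Suc k < length bs \<longrightarrow> nbhd E (bs ! Suc k) \<inter> C i \<subseteq> nbhd E (bs ! k) \<inter> C i))"

definition villa :: "'a set \<Rightarrow> ('a \<Rightarrow> 'a \<Rightarrow> bool) \<Rightarrow> nat \<Rightarrow> bool" where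
  "villa V E t \<longleftrightarrow> graph V E \<and> (\<exists>A B C. villa_partition V E t A B C)"

text \<open>t-mansion. Adjacency among the villa part is that of the whole graph,
  which is the same as adjacency in the induced subgraph.\<close>
definition mansion :: "'a set \<Rightarrow> ('a \<Rightarrow> 'a \<Rightarrow> bool) \<Rightarrow> nat \<Rightarrow> bool" where
  "mansion V E t \<longleftrightarrow> graph V E \<and>
    (\<exists>A B C F X Y j.
       is_partition V ([A, F, X, Y] @ map B [1..<t+1] @ map C [1..<t+1]) \<and>
       F \<noteq> {} \<and> clique E F \<and> clique E X \<and> clique E Y \<and>
       villa_partition (A \<union> (\<Union>i\<in>{1..t}. B i) \<union> (\<Union>i\<in>{1..t}. C i)) E t A B C \<and>
       j \<in> {1..t} \<and>
       complete_to E F A \<and>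
       complete_to E F (\<Union>i\<in>{1..t} - {j}. B i) \<and>
       complete_to E F (\<Union>i\<in>{1..t} - {j}. C i) \<and>
       anticomplete_to E F (B j \<union> C j) \<and>
       complete_to E (B j) (C j) \<and>
       complete_to E X (A \<union> B j) \<and>
       anticomplete_to E X (\<Union>i\<in>{1..t} - {j}. B i) \<and>
       anticomplete_to E X (\<Union>i\<in>{1..t}. C i) \<and>
       complete_to E F (X \<union> Y) \<and>
       anticomplete_to E X Y \<and>
       complete_to E Y (\<Union>i\<in>{1..t}. C i) \<and>
       anticomplete_to E Y (A \<union> (\<Union>i\<in>{1..t}. B i)))"

definition connected_graph :: "'a set \<Rightarrow> ('a \<Rightarrow> 'a \<Rightarrow> bool) \<Rightarrow> bool" where
  "connected_graph V E \<longleftrightarrow> (\<forall>x\<in>V. \<forall>y\<in>V. (\<lambda>u v. u \<in> V \<and> v \<in> V \<and> E u v)\<^sup>*\<^sup>* x y)"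

definition complement :: "'a set \<Rightarrow> ('a \<Rightarrow> 'a \<Rightarrow> bool) \<Rightarrow> 'a \<Rightarrow> 'a \<Rightarrow> bool" where
  "complement V E x y \<longleftrightarrow> x \<in> V \<and> y \<in> V \<and> x \<noteq> y \<and> \<not> E x y"

definition anticonnected :: "'a set \<Rightarrow> ('a \<Rightarrow> 'a \<Rightarrow> bool) \<Rightarrow> bool" where
  "anticonnected V E \<longleftrightarrow> connected_graph V (complement V E)"

definition simplicial :: "'a set \<Rightarrow> ('a \<Rightarrow> 'a \<Rightarrow> bool) \<Rightarrow> 'a \<Rightarrow> bool" where
  "simplicial V E v \<longleftrightarrow> v \<in> V \<and> clique E (nbhd E v \<inter> V)"

definition universal :: "'a set \<Rightarrow> ('a \<Rightarrow> 'a \<Rightarrow> bool) \<Rightarrow> 'a \<Rightarrow> bool" where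
  "universal V E v \<longleftrightarrow> v \<in> V \<and> (\<forall>u\<in>V. u \<noteq> v \<longrightarrow> E v u)"

end

theory Submission
  imports Defs
begin


definition adj1 :: "nat \<Rightarrow> nat \<times> nat \<times> nat \<Rightarrow> nat \<times> nat \<times> nat \<Rightarrow> bool" where
"adj1 j p q = (case p of (c1,i1,r1) \<Rightarrow> case q of (c2,i2,r2) \<Rightarrow>
   (c1 = c2 \<and> c1 \<le> 3) \<or> (c1 = 4 \<and> c2 = 4 \<and> i1 = i2) \<or> (c1 = 5 \<and> c2 = 5) \<or>
   (c1 = 0 \<and> (c2 = 1 \<or> c2 = 2 \<or> c2 = 4)) \<or>
   (c1 = 1 \<and> (c2 = 2 \<or> c2 = 3)) \<or>
   (c1 = 1 \<and> (c2 = 4 \<or> c2 = 5) \<and> i2 \<noteq> j) \<or>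
   (c1 = 2 \<and> c2 = 4 \<and> i2 = j) \<or>
   (c1 = 3 \<and> c2 = 5) \<or>
   (c1 = 4 \<and> c2 = 5 \<and> i1 = i2 \<and> (i1 = j \<or> r2 \<le> r1)))"

definition adjf :: "nat \<Rightarrow> nat \<times> nat \<times> nat \<Rightarrow> nat \<times> nat \<times> nat \<Rightarrow> bool" where
"adjf j p q = (adj1 j p q \<or> adj1 j q p)"

lemma adjf_0_0: "adjf j (0, i, r) (0, i', r') = (True)" by (simp add: adjf_def adj1_def)
lemma adjf_0_1: "adjf j (0, i, r) (1, i', r') = (True)" by (simp add: adjf_def adj1_def)
lemma adjf_0_2: "adjf j (0, i, r) (2, i', r') = (True)" by (simp add: adjf_def adj1_def)
lemma adjf_0_3: "adjf j (0, i, r) (3, i', r') = (False)" by (simp add: adjf_def adj1_def)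
lemma adjf_0_4: "adjf j (0, i, r) (4, i', r') = (True)" by (simp add: adjf_def adj1_def)
lemma adjf_0_5: "adjf j (0, i, r) (5, i', r') = (False)" by (simp add: adjf_def adj1_def)
lemma adjf_1_0: "adjf j (1, i, r) (0, i', r') = (True)" by (simp add: adjf_def adj1_def)
lemma adjf_1_1: "adjf j (1, i, r) (1, i', r') = (True)" by (simp add: adjf_def adj1_def)
lemma adjf_1_2: "adjf j (1, i, r) (2, i', r') = (True)" by (simp add: adjf_def adj1_def)
lemma adjf_1_3: "adjf j (1, i, r) (3, i', r') = (True)" by (simp add: adjf_def adj1_def)
lemma adjf_1_4: "adjf j (1, i, r) (4, i', r') = ((i' \<noteq> j))" by (simp add: adjf_def adj1_def)
lemma adjf_1_5: "adjf j (1, i, r) (5, i', r') = ((i' \<noteq> j))" by (simp add: adjf_def adj1_def)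
lemma adjf_2_0: "adjf j (2, i, r) (0, i', r') = (True)" by (simp add: adjf_def adj1_def)
lemma adjf_2_1: "adjf j (2, i, r) (1, i', r') = (True)" by (simp add: adjf_def adj1_def)
lemma adjf_2_2: "adjf j (2, i, r) (2, i', r') = (True)" by (simp add: adjf_def adj1_def)
lemma adjf_2_3: "adjf j (2, i, r) (3, i', r') = (False)" by (simp add: adjf_def adj1_def)
lemma adjf_2_4: "adjf j (2, i, r) (4, i', r') = ((i' = j))" by (simp add: adjf_def adj1_def)
lemma adjf_2_5: "adjf j (2, i, r) (5, i', r') = (False)" by (simp add: adjf_def adj1_def)
lemma adjf_3_0: "adjf j (3, i, r) (0, i', r') = (False)" by (simp add: adjf_def adj1_def)
lemma adjf_3_1: "adjf j (3, i, r) (1, i', r') = (True)" by (simp add: adjf_def adj1_def)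
lemma adjf_3_2: "adjf j (3, i, r) (2, i', r') = (False)" by (simp add: adjf_def adj1_def)
lemma adjf_3_3: "adjf j (3, i, r) (3, i', r') = (True)" by (simp add: adjf_def adj1_def)
lemma adjf_3_4: "adjf j (3, i, r) (4, i', r') = (False)" by (simp add: adjf_def adj1_def)
lemma adjf_3_5: "adjf j (3, i, r) (5, i', r') = (True)" by (simp add: adjf_def adj1_def)
lemma adjf_4_0: "adjf j (4, i, r) (0, i', r') = (True)" by (simp add: adjf_def adj1_def)
lemma adjf_4_1: "adjf j (4, i, r) (1, i', r') = ((i \<noteq> j))" by (simp add: adjf_def adj1_def)
lemma adjf_4_2: "adjf j (4, i, r) (2, i', r') = ((i = j))" by (simp add: adjf_def adj1_def)
lemma adjf_4_3: "adjf j (4, i, r) (3, i', r') = (False)" by (simp add: adjf_def adj1_def)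
lemma adjf_4_4: "adjf j (4, i, r) (4, i', r') = ((i = i') \<or> (i' = i))" by (simp add: adjf_def adj1_def)
lemma adjf_4_5: "adjf j (4, i, r) (5, i', r') = (((i = i' \<and> (i = j \<or> r' \<le> r))))" by (simp add: adjf_def adj1_def)
lemma adjf_5_0: "adjf j (5, i, r) (0, i', r') = (False)" by (simp add: adjf_def adj1_def)
lemma adjf_5_1: "adjf j (5, i, r) (1, i', r') = ((i \<noteq> j))" by (simp add: adjf_def adj1_def)
lemma adjf_5_2: "adjf j (5, i, r) (2, i', r') = (False)" by (simp add: adjf_def adj1_def)
lemma adjf_5_3: "adjf j (5, i, r) (3, i', r') = (True)" by (simp add: adjf_def adj1_def)
lemma adjf_5_4: "adjf j (5, i, r) (4, i', r') = (((i' = i \<and> (i' = j \<or> r \<le> r'))))" by (simp add: adjf_def adj1_def)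
lemma adjf_5_5: "adjf j (5, i, r) (5, i', r') = (True)" by (simp add: adjf_def adj1_def)
lemmas adjf_eval = adjf_0_0 adjf_0_1 adjf_0_2 adjf_0_3 adjf_0_4 adjf_0_5 adjf_1_0 adjf_1_1 adjf_1_2 adjf_1_3 adjf_1_4 adjf_1_5 adjf_2_0 adjf_2_1 adjf_2_2 adjf_2_3 adjf_2_4 adjf_2_5 adjf_3_0 adjf_3_1 adjf_3_2 adjf_3_3 adjf_3_4 adjf_3_5 adjf_4_0 adjf_4_1 adjf_4_2 adjf_4_3 adjf_4_4 adjf_4_5 adjf_5_0 adjf_5_1 adjf_5_2 adjf_5_3 adjf_5_4 adjf_5_5

lemma c6E: "c \<le> (5::nat) \<Longrightarrow> (c = 0 \<Longrightarrow> P) \<Longrightarrow> (c = 1 \<Longrightarrow> P) \<Longrightarrow> (c = 2 \<Longrightarrow> P) \<Longrightarrow> (c = 3 \<Longrightarrow> P) \<Longrightarrow> (c = 4 \<Longrightarrow> P) \<Longrightarrow> (c = 5 \<Longrightarrow> P) \<Longrightarrow> P"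
  by (cases c; auto simp: numeral_eq_Suc le_Suc_eq)

lemma noC4:
  assumes "\<forall>x\<in>cycV 4. \<forall>y\<in>cycV 4. x \<noteq> y \<longrightarrow> (cycE 4 x y \<longleftrightarrow> adjf j (L x) (L y))"
    and "\<forall>x\<in>cycV 4. fst (L x) \<le> 5"
  shows False
proof -
  obtain c0 i0 r0 where 0: "L 0 = (c0,i0,r0)" by (metis prod_cases3)
  obtain c1 i1 r1 where 1: "L 1 = (c1,i1,r1)" by (metis prod_cases3)
  obtain c2 i2 r2 where 2: "L 2 = (c2,i2,r2)" by (metis prod_cases3)
  obtain c3 i3 r3 where 3: "L 3 = (c3,i3,r3)" by (metis prod_cases3)
  have P: "\<And>x y. x < 4 \<Longrightarrow> y < 4 \<Longrightarrow> x \<noteq> y \<Longrightarrow> (cycE 4 x y \<longleftrightarrow> adjf j (L x) (L y))"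
    using assms by (auto simp: cycV_def)
  have B: "\<And>x. x < 4 \<Longrightarrow> fst (L x) \<le> 5" using assms(2) by (auto simp: cycV_def)
  have b0: "c0 \<le> 5" using B[of 0] unfolding 0 by simp
  have b1: "c1 \<le> 5" using B[of 1] unfolding 1 by simp
  have b2: "c2 \<le> 5" using B[of 2] unfolding 2 by simp
  have b3: "c3 \<le> 5" using B[of 3] unfolding 3 by simp
  have e0_1: "adjf j (c0,i0,r0) (c1,i1,r1)" using P[of 0 1] unfolding 0 1 by (simp add: cycE_def doubleton_eq_iff)
  have e0_2: "\<not> adjf j (c0,i0,r0) (c2,i2,r2)" using P[of 0 2] unfolding 0 2 by (simp add: cycE_def doubleton_eq_iff)
  have e0_3: "adjf j (c0,i0,r0) (c3,i3,r3)" using P[of 0 3] unfolding 0 3 by (simp add: cycE_def doubleton_eq_iff)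
  have e1_2: "adjf j (c1,i1,r1) (c2,i2,r2)" using P[of 1 2] unfolding 1 2 by (simp add: cycE_def doubleton_eq_iff)
  have e1_3: "\<not> adjf j (c1,i1,r1) (c3,i3,r3)" using P[of 1 3] unfolding 1 3 by (simp add: cycE_def doubleton_eq_iff)
  have e2_3: "adjf j (c2,i2,r2) (c3,i3,r3)" using P[of 2 3] unfolding 2 3 by (simp add: cycE_def doubleton_eq_iff)
  show False
    apply (insert e0_1 e0_2 e0_3 e1_2 e1_3 e2_3)
    by (rule c6E[OF b0]; rotate_tac -1; (simp only: adjf_eval simp_thms)?; rule c6E[OF b1]; rotate_tac -1; (simp only: adjf_eval simp_thms)?; rule c6E[OF b2]; rotate_tac -1; (simp only: adjf_eval simp_thms)?; rule c6E[OF b3]; rotate_tac -1; (simp only: adjf_eval simp_thms)?; auto)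
qed

lemma noC6:
  assumes "\<forall>x\<in>cycV 6. \<forall>y\<in>cycV 6. x \<noteq> y \<longrightarrow> (cycE 6 x y \<longleftrightarrow> adjf j (L x) (L y))"
    and "\<forall>x\<in>cycV 6. fst (L x) \<le> 5"
  shows False
proof -
  obtain c0 i0 r0 where 0: "L 0 = (c0,i0,r0)" by (metis prod_cases3)
  obtain c1 i1 r1 where 1: "L 1 = (c1,i1,r1)" by (metis prod_cases3)
  obtain c2 i2 r2 where 2: "L 2 = (c2,i2,r2)" by (metis prod_cases3)
  obtain c3 i3 r3 where 3: "L 3 = (c3,i3,r3)" by (metis prod_cases3)
  obtain c4 i4 r4 where 4: "L 4 = (c4,i4,r4)" by (metis prod_cases3)
  obtain c5 i5 r5 where 5: "L 5 = (c5,i5,r5)" by (metis prod_cases3)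
  have P: "\<And>x y. x < 6 \<Longrightarrow> y < 6 \<Longrightarrow> x \<noteq> y \<Longrightarrow> (cycE 6 x y \<longleftrightarrow> adjf j (L x) (L y))"
    using assms by (auto simp: cycV_def)
  have B: "\<And>x. x < 6 \<Longrightarrow> fst (L x) \<le> 5" using assms(2) by (auto simp: cycV_def)
  have b0: "c0 \<le> 5" using B[of 0] unfolding 0 by simp
  have b1: "c1 \<le> 5" using B[of 1] unfolding 1 by simp
  have b2: "c2 \<le> 5" using B[of 2] unfolding 2 by simp
  have b3: "c3 \<le> 5" using B[of 3] unfolding 3 by simp
  have b4: "c4 \<le> 5" using B[of 4] unfolding 4 by simp
  have b5: "c5 \<le> 5" using B[of 5] unfolding 5 by simp
  have e0_1: "adjf j (c0,i0,r0) (c1,i1,r1)" using P[of 0 1] unfolding 0 1 by (simp add: cycE_def doubleton_eq_iff)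
  have e0_2: "\<not> adjf j (c0,i0,r0) (c2,i2,r2)" using P[of 0 2] unfolding 0 2 by (simp add: cycE_def doubleton_eq_iff)
  have e0_3: "\<not> adjf j (c0,i0,r0) (c3,i3,r3)" using P[of 0 3] unfolding 0 3 by (simp add: cycE_def doubleton_eq_iff)
  have e0_4: "\<not> adjf j (c0,i0,r0) (c4,i4,r4)" using P[of 0 4] unfolding 0 4 by (simp add: cycE_def doubleton_eq_iff)
  have e0_5: "adjf j (c0,i0,r0) (c5,i5,r5)" using P[of 0 5] unfolding 0 5 by (simp add: cycE_def doubleton_eq_iff)
  have e1_2: "adjf j (c1,i1,r1) (c2,i2,r2)" using P[of 1 2] unfolding 1 2 by (simp add: cycE_def doubleton_eq_iff)
  have e1_3: "\<not> adjf j (c1,i1,r1) (c3,i3,r3)" using P[of 1 3] unfolding 1 3 by (simp add: cycE_def doubleton_eq_iff)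
  have e1_4: "\<not> adjf j (c1,i1,r1) (c4,i4,r4)" using P[of 1 4] unfolding 1 4 by (simp add: cycE_def doubleton_eq_iff)
  have e1_5: "\<not> adjf j (c1,i1,r1) (c5,i5,r5)" using P[of 1 5] unfolding 1 5 by (simp add: cycE_def doubleton_eq_iff)
  have e2_3: "adjf j (c2,i2,r2) (c3,i3,r3)" using P[of 2 3] unfolding 2 3 by (simp add: cycE_def doubleton_eq_iff)
  have e2_4: "\<not> adjf j (c2,i2,r2) (c4,i4,r4)" using P[of 2 4] unfolding 2 4 by (simp add: cycE_def doubleton_eq_iff)
  have e2_5: "\<not> adjf j (c2,i2,r2) (c5,i5,r5)" using P[of 2 5] unfolding 2 5 by (simp add: cycE_def doubleton_eq_iff)
  have e3_4: "adjf j (c3,i3,r3) (c4,i4,r4)" using P[of 3 4] unfolding 3 4 by (simp add: cycE_def doubleton_eq_iff)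
  have e3_5: "\<not> adjf j (c3,i3,r3) (c5,i5,r5)" using P[of 3 5] unfolding 3 5 by (simp add: cycE_def doubleton_eq_iff)
  have e4_5: "adjf j (c4,i4,r4) (c5,i5,r5)" using P[of 4 5] unfolding 4 5 by (simp add: cycE_def doubleton_eq_iff)
  show False
    apply (insert e0_1 e0_2 e0_3 e0_4 e0_5 e1_2 e1_3 e1_4 e1_5 e2_3 e2_4 e2_5 e3_4 e3_5 e4_5)
    by (rule c6E[OF b0]; rotate_tac -1; (simp only: adjf_eval simp_thms)?; rule c6E[OF b1]; rotate_tac -1; (simp only: adjf_eval simp_thms)?; rule c6E[OF b2]; rotate_tac -1; (simp only: adjf_eval simp_thms)?; rule c6E[OF b3]; rotate_tac -1; (simp only: adjf_eval simp_thms)?; rule c6E[OF b4]; rotate_tac -1; (simp only: adjf_eval simp_thms)?; rule c6E[OF b5]; rotate_tac -1; (simp only: adjf_eval simp_thms)?; auto)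
qed

lemma noC7:
  assumes "\<forall>x\<in>cycV 7. \<forall>y\<in>cycV 7. x \<noteq> y \<longrightarrow> (cycE 7 x y \<longleftrightarrow> adjf j (L x) (L y))"
    and "\<forall>x\<in>cycV 7. fst (L x) \<le> 5"
  shows False
proof -
  obtain c0 i0 r0 where 0: "L 0 = (c0,i0,r0)" by (metis prod_cases3)
  obtain c1 i1 r1 where 1: "L 1 = (c1,i1,r1)" by (metis prod_cases3)
  obtain c2 i2 r2 where 2: "L 2 = (c2,i2,r2)" by (metis prod_cases3)
  obtain c3 i3 r3 where 3: "L 3 = (c3,i3,r3)" by (metis prod_cases3)
  obtain c4 i4 r4 where 4: "L 4 = (c4,i4,r4)" by (metis prod_cases3)
  obtain c5 i5 r5 where 5: "L 5 = (c5,i5,r5)" by (metis prod_cases3)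
  obtain c6 i6 r6 where 6: "L 6 = (c6,i6,r6)" by (metis prod_cases3)
  have P: "\<And>x y. x < 7 \<Longrightarrow> y < 7 \<Longrightarrow> x \<noteq> y \<Longrightarrow> (cycE 7 x y \<longleftrightarrow> adjf j (L x) (L y))"
    using assms by (auto simp: cycV_def)
  have B: "\<And>x. x < 7 \<Longrightarrow> fst (L x) \<le> 5" using assms(2) by (auto simp: cycV_def)
  have b0: "c0 \<le> 5" using B[of 0] unfolding 0 by simp
  have b1: "c1 \<le> 5" using B[of 1] unfolding 1 by simp
  have b2: "c2 \<le> 5" using B[of 2] unfolding 2 by simp
  have b3: "c3 \<le> 5" using B[of 3] unfolding 3 by simp
  have b4: "c4 \<le> 5" using B[of 4] unfolding 4 by simp
  have b5: "c5 \<le> 5" using B[of 5] unfolding 5 by simp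
  have b6: "c6 \<le> 5" using B[of 6] unfolding 6 by simp
  have e0_1: "adjf j (c0,i0,r0) (c1,i1,r1)" using P[of 0 1] unfolding 0 1 by (simp add: cycE_def doubleton_eq_iff)
  have e0_2: "\<not> adjf j (c0,i0,r0) (c2,i2,r2)" using P[of 0 2] unfolding 0 2 by (simp add: cycE_def doubleton_eq_iff)
  have e0_3: "\<not> adjf j (c0,i0,r0) (c3,i3,r3)" using P[of 0 3] unfolding 0 3 by (simp add: cycE_def doubleton_eq_iff)
  have e0_4: "\<not> adjf j (c0,i0,r0) (c4,i4,r4)" using P[of 0 4] unfolding 0 4 by (simp add: cycE_def doubleton_eq_iff)
  have e0_5: "\<not> adjf j (c0,i0,r0) (c5,i5,r5)" using P[of 0 5] unfolding 0 5 by (simp add: cycE_def doubleton_eq_iff)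
  have e0_6: "adjf j (c0,i0,r0) (c6,i6,r6)" using P[of 0 6] unfolding 0 6 by (simp add: cycE_def doubleton_eq_iff)
  have e1_2: "adjf j (c1,i1,r1) (c2,i2,r2)" using P[of 1 2] unfolding 1 2 by (simp add: cycE_def doubleton_eq_iff)
  have e1_3: "\<not> adjf j (c1,i1,r1) (c3,i3,r3)" using P[of 1 3] unfolding 1 3 by (simp add: cycE_def doubleton_eq_iff)
  have e1_4: "\<not> adjf j (c1,i1,r1) (c4,i4,r4)" using P[of 1 4] unfolding 1 4 by (simp add: cycE_def doubleton_eq_iff)
  have e1_5: "\<not> adjf j (c1,i1,r1) (c5,i5,r5)" using P[of 1 5] unfolding 1 5 by (simp add: cycE_def doubleton_eq_iff)
  have e1_6: "\<not> adjf j (c1,i1,r1) (c6,i6,r6)" using P[of 1 6] unfolding 1 6 by (simp add: cycE_def doubleton_eq_iff)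
  have e2_3: "adjf j (c2,i2,r2) (c3,i3,r3)" using P[of 2 3] unfolding 2 3 by (simp add: cycE_def doubleton_eq_iff)
  have e2_4: "\<not> adjf j (c2,i2,r2) (c4,i4,r4)" using P[of 2 4] unfolding 2 4 by (simp add: cycE_def doubleton_eq_iff)
  have e2_5: "\<not> adjf j (c2,i2,r2) (c5,i5,r5)" using P[of 2 5] unfolding 2 5 by (simp add: cycE_def doubleton_eq_iff)
  have e2_6: "\<not> adjf j (c2,i2,r2) (c6,i6,r6)" using P[of 2 6] unfolding 2 6 by (simp add: cycE_def doubleton_eq_iff)
  have e3_4: "adjf j (c3,i3,r3) (c4,i4,r4)" using P[of 3 4] unfolding 3 4 by (simp add: cycE_def doubleton_eq_iff)
  have e3_5: "\<not> adjf j (c3,i3,r3) (c5,i5,r5)" using P[of 3 5] unfolding 3 5 by (simp add: cycE_def doubleton_eq_iff)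
  have e3_6: "\<not> adjf j (c3,i3,r3) (c6,i6,r6)" using P[of 3 6] unfolding 3 6 by (simp add: cycE_def doubleton_eq_iff)
  have e4_5: "adjf j (c4,i4,r4) (c5,i5,r5)" using P[of 4 5] unfolding 4 5 by (simp add: cycE_def doubleton_eq_iff)
  have e4_6: "\<not> adjf j (c4,i4,r4) (c6,i6,r6)" using P[of 4 6] unfolding 4 6 by (simp add: cycE_def doubleton_eq_iff)
  have e5_6: "adjf j (c5,i5,r5) (c6,i6,r6)" using P[of 5 6] unfolding 5 6 by (simp add: cycE_def doubleton_eq_iff)
  show False
    apply (insert e0_1 e0_2 e0_3 e0_4 e0_5 e0_6 e1_2 e1_3 e1_4 e1_5 e1_6 e2_3 e2_4 e2_5 e2_6 e3_4 e3_5 e3_6 e4_5 e4_6 e5_6)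
    by (rule c6E[OF b0]; rotate_tac -1; (simp only: adjf_eval simp_thms)?; rule c6E[OF b1]; rotate_tac -1; (simp only: adjf_eval simp_thms)?; rule c6E[OF b2]; rotate_tac -1; (simp only: adjf_eval simp_thms)?; rule c6E[OF b3]; rotate_tac -1; (simp only: adjf_eval simp_thms)?; rule c6E[OF b4]; rotate_tac -1; (simp only: adjf_eval simp_thms)?; rule c6E[OF b5]; rotate_tac -1; (simp only: adjf_eval simp_thms)?; rule c6E[OF b6]; rotate_tac -1; (simp only: adjf_eval simp_thms)?; auto)
qed

lemma no2P3:
  assumes "\<forall>x\<in>twoP3V. \<forall>y\<in>twoP3V. x \<noteq> y \<longrightarrow> (twoP3E x y \<longleftrightarrow> adjf j (L x) (L y))"
    and "\<forall>x\<in>twoP3V. fst (L x) \<le> 5"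
  shows False
proof -
  obtain c0 i0 r0 where 0: "L 0 = (c0,i0,r0)" by (metis prod_cases3)
  obtain c1 i1 r1 where 1: "L 1 = (c1,i1,r1)" by (metis prod_cases3)
  obtain c2 i2 r2 where 2: "L 2 = (c2,i2,r2)" by (metis prod_cases3)
  obtain c3 i3 r3 where 3: "L 3 = (c3,i3,r3)" by (metis prod_cases3)
  obtain c4 i4 r4 where 4: "L 4 = (c4,i4,r4)" by (metis prod_cases3)
  obtain c5 i5 r5 where 5: "L 5 = (c5,i5,r5)" by (metis prod_cases3)
  have P: "\<And>x y. x < 6 \<Longrightarrow> y < 6 \<Longrightarrow> x \<noteq> y \<Longrightarrow> (twoP3E x y \<longleftrightarrow> adjf j (L x) (L y))"
    using assms by (auto simp: twoP3V_def)
  have B: "\<And>x. x < 6 \<Longrightarrow> fst (L x) \<le> 5" using assms(2) by (auto simp: twoP3V_def)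
  have b0: "c0 \<le> 5" using B[of 0] unfolding 0 by simp
  have b1: "c1 \<le> 5" using B[of 1] unfolding 1 by simp
  have b2: "c2 \<le> 5" using B[of 2] unfolding 2 by simp
  have b3: "c3 \<le> 5" using B[of 3] unfolding 3 by simp
  have b4: "c4 \<le> 5" using B[of 4] unfolding 4 by simp
  have b5: "c5 \<le> 5" using B[of 5] unfolding 5 by simp
  have e0_1: "adjf j (c0,i0,r0) (c1,i1,r1)" using P[of 0 1] unfolding 0 1 by (simp add: twoP3E_def doubleton_eq_iff)
  have e0_2: "\<not> adjf j (c0,i0,r0) (c2,i2,r2)" using P[of 0 2] unfolding 0 2 by (simp add: twoP3E_def doubleton_eq_iff)
  have e0_3: "\<not> adjf j (c0,i0,r0) (c3,i3,r3)" using P[of 0 3] unfolding 0 3 by (simp add: twoP3E_def doubleton_eq_iff)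
  have e0_4: "\<not> adjf j (c0,i0,r0) (c4,i4,r4)" using P[of 0 4] unfolding 0 4 by (simp add: twoP3E_def doubleton_eq_iff)
  have e0_5: "\<not> adjf j (c0,i0,r0) (c5,i5,r5)" using P[of 0 5] unfolding 0 5 by (simp add: twoP3E_def doubleton_eq_iff)
  have e1_2: "adjf j (c1,i1,r1) (c2,i2,r2)" using P[of 1 2] unfolding 1 2 by (simp add: twoP3E_def doubleton_eq_iff)
  have e1_3: "\<not> adjf j (c1,i1,r1) (c3,i3,r3)" using P[of 1 3] unfolding 1 3 by (simp add: twoP3E_def doubleton_eq_iff)
  have e1_4: "\<not> adjf j (c1,i1,r1) (c4,i4,r4)" using P[of 1 4] unfolding 1 4 by (simp add: twoP3E_def doubleton_eq_iff)
  have e1_5: "\<not> adjf j (c1,i1,r1) (c5,i5,r5)" using P[of 1 5] unfolding 1 5 by (simp add: twoP3E_def doubleton_eq_iff)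
  have e2_3: "\<not> adjf j (c2,i2,r2) (c3,i3,r3)" using P[of 2 3] unfolding 2 3 by (simp add: twoP3E_def doubleton_eq_iff)
  have e2_4: "\<not> adjf j (c2,i2,r2) (c4,i4,r4)" using P[of 2 4] unfolding 2 4 by (simp add: twoP3E_def doubleton_eq_iff)
  have e2_5: "\<not> adjf j (c2,i2,r2) (c5,i5,r5)" using P[of 2 5] unfolding 2 5 by (simp add: twoP3E_def doubleton_eq_iff)
  have e3_4: "adjf j (c3,i3,r3) (c4,i4,r4)" using P[of 3 4] unfolding 3 4 by (simp add: twoP3E_def doubleton_eq_iff)
  have e3_5: "\<not> adjf j (c3,i3,r3) (c5,i5,r5)" using P[of 3 5] unfolding 3 5 by (simp add: twoP3E_def doubleton_eq_iff)
  have e4_5: "adjf j (c4,i4,r4) (c5,i5,r5)" using P[of 4 5] unfolding 4 5 by (simp add: twoP3E_def doubleton_eq_iff)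
  show False
    apply (insert e0_1 e0_2 e0_3 e0_4 e0_5 e1_2 e1_3 e1_4 e1_5 e2_3 e2_4 e2_5 e3_4 e3_5 e4_5)
    by (rule c6E[OF b1]; rotate_tac -1; (simp only: adjf_eval simp_thms)?; rule c6E[OF b0]; rotate_tac -1; (simp only: adjf_eval simp_thms)?; rule c6E[OF b2]; rotate_tac -1; (simp only: adjf_eval simp_thms)?; rule c6E[OF b4]; rotate_tac -1; (simp only: adjf_eval simp_thms)?; rule c6E[OF b3]; rotate_tac -1; (simp only: adjf_eval simp_thms)?; rule c6E[OF b5]; rotate_tac -1; (simp only: adjf_eval simp_thms)?; auto)
qed

lemma noT0:
  assumes "\<forall>x\<in>T0V. \<forall>y\<in>T0V. x \<noteq> y \<longrightarrow> (T0E x y \<longleftrightarrow> adjf j (L x) (L y))"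
    and "\<forall>x\<in>T0V. fst (L x) \<le> 5"
  shows False
proof -
  obtain c0 i0 r0 where 0: "L 0 = (c0,i0,r0)" by (metis prod_cases3)
  obtain c1 i1 r1 where 1: "L 1 = (c1,i1,r1)" by (metis prod_cases3)
  obtain c2 i2 r2 where 2: "L 2 = (c2,i2,r2)" by (metis prod_cases3)
  obtain c3 i3 r3 where 3: "L 3 = (c3,i3,r3)" by (metis prod_cases3)
  obtain c4 i4 r4 where 4: "L 4 = (c4,i4,r4)" by (metis prod_cases3)
  obtain c5 i5 r5 where 5: "L 5 = (c5,i5,r5)" by (metis prod_cases3)
  obtain c6 i6 r6 where 6: "L 6 = (c6,i6,r6)" by (metis prod_cases3)
  obtain c7 i7 r7 where 7: "L 7 = (c7,i7,r7)" by (metis prod_cases3)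
  obtain c8 i8 r8 where 8: "L 8 = (c8,i8,r8)" by (metis prod_cases3)
  have P: "\<And>x y. x < 9 \<Longrightarrow> y < 9 \<Longrightarrow> x \<noteq> y \<Longrightarrow> (T0E x y \<longleftrightarrow> adjf j (L x) (L y))"
    using assms by (auto simp: T0V_def)
  have B: "\<And>x. x < 9 \<Longrightarrow> fst (L x) \<le> 5" using assms(2) by (auto simp: T0V_def)
  have b0: "c0 \<le> 5" using B[of 0] unfolding 0 by simp
  have b1: "c1 \<le> 5" using B[of 1] unfolding 1 by simp
  have b2: "c2 \<le> 5" using B[of 2] unfolding 2 by simp
  have b3: "c3 \<le> 5" using B[of 3] unfolding 3 by simp
  have b4: "c4 \<le> 5" using B[of 4] unfolding 4 by simp
  have b5: "c5 \<le> 5" using B[of 5] unfolding 5 by simp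
  have b6: "c6 \<le> 5" using B[of 6] unfolding 6 by simp
  have b7: "c7 \<le> 5" using B[of 7] unfolding 7 by simp
  have b8: "c8 \<le> 5" using B[of 8] unfolding 8 by simp
  have e0_1: "adjf j (c0,i0,r0) (c1,i1,r1)" using P[of 0 1] unfolding 0 1 by (simp add: T0E_def doubleton_eq_iff)
  have e0_2: "adjf j (c0,i0,r0) (c2,i2,r2)" using P[of 0 2] unfolding 0 2 by (simp add: T0E_def doubleton_eq_iff)
  have e0_3: "\<not> adjf j (c0,i0,r0) (c3,i3,r3)" using P[of 0 3] unfolding 0 3 by (simp add: T0E_def doubleton_eq_iff)
  have e0_4: "adjf j (c0,i0,r0) (c4,i4,r4)" using P[of 0 4] unfolding 0 4 by (simp add: T0E_def doubleton_eq_iff)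
  have e0_5: "adjf j (c0,i0,r0) (c5,i5,r5)" using P[of 0 5] unfolding 0 5 by (simp add: T0E_def doubleton_eq_iff)
  have e0_6: "\<not> adjf j (c0,i0,r0) (c6,i6,r6)" using P[of 0 6] unfolding 0 6 by (simp add: T0E_def doubleton_eq_iff)
  have e0_7: "\<not> adjf j (c0,i0,r0) (c7,i7,r7)" using P[of 0 7] unfolding 0 7 by (simp add: T0E_def doubleton_eq_iff)
  have e0_8: "\<not> adjf j (c0,i0,r0) (c8,i8,r8)" using P[of 0 8] unfolding 0 8 by (simp add: T0E_def doubleton_eq_iff)
  have e1_2: "\<not> adjf j (c1,i1,r1) (c2,i2,r2)" using P[of 1 2] unfolding 1 2 by (simp add: T0E_def doubleton_eq_iff)
  have e1_3: "adjf j (c1,i1,r1) (c3,i3,r3)" using P[of 1 3] unfolding 1 3 by (simp add: T0E_def doubleton_eq_iff)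
  have e1_4: "adjf j (c1,i1,r1) (c4,i4,r4)" using P[of 1 4] unfolding 1 4 by (simp add: T0E_def doubleton_eq_iff)
  have e1_5: "adjf j (c1,i1,r1) (c5,i5,r5)" using P[of 1 5] unfolding 1 5 by (simp add: T0E_def doubleton_eq_iff)
  have e1_6: "\<not> adjf j (c1,i1,r1) (c6,i6,r6)" using P[of 1 6] unfolding 1 6 by (simp add: T0E_def doubleton_eq_iff)
  have e1_7: "\<not> adjf j (c1,i1,r1) (c7,i7,r7)" using P[of 1 7] unfolding 1 7 by (simp add: T0E_def doubleton_eq_iff)
  have e1_8: "\<not> adjf j (c1,i1,r1) (c8,i8,r8)" using P[of 1 8] unfolding 1 8 by (simp add: T0E_def doubleton_eq_iff)
  have e2_3: "\<not> adjf j (c2,i2,r2) (c3,i3,r3)" using P[of 2 3] unfolding 2 3 by (simp add: T0E_def doubleton_eq_iff)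
  have e2_4: "\<not> adjf j (c2,i2,r2) (c4,i4,r4)" using P[of 2 4] unfolding 2 4 by (simp add: T0E_def doubleton_eq_iff)
  have e2_5: "\<not> adjf j (c2,i2,r2) (c5,i5,r5)" using P[of 2 5] unfolding 2 5 by (simp add: T0E_def doubleton_eq_iff)
  have e2_6: "adjf j (c2,i2,r2) (c6,i6,r6)" using P[of 2 6] unfolding 2 6 by (simp add: T0E_def doubleton_eq_iff)
  have e2_7: "\<not> adjf j (c2,i2,r2) (c7,i7,r7)" using P[of 2 7] unfolding 2 7 by (simp add: T0E_def doubleton_eq_iff)
  have e2_8: "\<not> adjf j (c2,i2,r2) (c8,i8,r8)" using P[of 2 8] unfolding 2 8 by (simp add: T0E_def doubleton_eq_iff)
  have e3_4: "\<not> adjf j (c3,i3,r3) (c4,i4,r4)" using P[of 3 4] unfolding 3 4 by (simp add: T0E_def doubleton_eq_iff)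
  have e3_5: "\<not> adjf j (c3,i3,r3) (c5,i5,r5)" using P[of 3 5] unfolding 3 5 by (simp add: T0E_def doubleton_eq_iff)
  have e3_6: "adjf j (c3,i3,r3) (c6,i6,r6)" using P[of 3 6] unfolding 3 6 by (simp add: T0E_def doubleton_eq_iff)
  have e3_7: "\<not> adjf j (c3,i3,r3) (c7,i7,r7)" using P[of 3 7] unfolding 3 7 by (simp add: T0E_def doubleton_eq_iff)
  have e3_8: "\<not> adjf j (c3,i3,r3) (c8,i8,r8)" using P[of 3 8] unfolding 3 8 by (simp add: T0E_def doubleton_eq_iff)
  have e4_5: "\<not> adjf j (c4,i4,r4) (c5,i5,r5)" using P[of 4 5] unfolding 4 5 by (simp add: T0E_def doubleton_eq_iff)
  have e4_6: "\<not> adjf j (c4,i4,r4) (c6,i6,r6)" using P[of 4 6] unfolding 4 6 by (simp add: T0E_def doubleton_eq_iff)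
  have e4_7: "adjf j (c4,i4,r4) (c7,i7,r7)" using P[of 4 7] unfolding 4 7 by (simp add: T0E_def doubleton_eq_iff)
  have e4_8: "\<not> adjf j (c4,i4,r4) (c8,i8,r8)" using P[of 4 8] unfolding 4 8 by (simp add: T0E_def doubleton_eq_iff)
  have e5_6: "\<not> adjf j (c5,i5,r5) (c6,i6,r6)" using P[of 5 6] unfolding 5 6 by (simp add: T0E_def doubleton_eq_iff)
  have e5_7: "\<not> adjf j (c5,i5,r5) (c7,i7,r7)" using P[of 5 7] unfolding 5 7 by (simp add: T0E_def doubleton_eq_iff)
  have e5_8: "adjf j (c5,i5,r5) (c8,i8,r8)" using P[of 5 8] unfolding 5 8 by (simp add: T0E_def doubleton_eq_iff)
  have e6_7: "adjf j (c6,i6,r6) (c7,i7,r7)" using P[of 6 7] unfolding 6 7 by (simp add: T0E_def doubleton_eq_iff)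
  have e6_8: "adjf j (c6,i6,r6) (c8,i8,r8)" using P[of 6 8] unfolding 6 8 by (simp add: T0E_def doubleton_eq_iff)
  have e7_8: "adjf j (c7,i7,r7) (c8,i8,r8)" using P[of 7 8] unfolding 7 8 by (simp add: T0E_def doubleton_eq_iff)
  show False
    apply (insert e0_1 e0_2 e0_3 e0_4 e0_5 e0_6 e0_7 e0_8 e1_2 e1_3 e1_4 e1_5 e1_6 e1_7 e1_8 e2_3 e2_4 e2_5 e2_6 e2_7 e2_8 e3_4 e3_5 e3_6 e3_7 e3_8 e4_5 e4_6 e4_7 e4_8 e5_6 e5_7 e5_8 e6_7 e6_8 e7_8)
    by (rule c6E[OF b6]; rotate_tac -1; (simp only: adjf_eval simp_thms)?; rule c6E[OF b7]; rotate_tac -1; (simp only: adjf_eval simp_thms)?; rule c6E[OF b8]; rotate_tac -1; (simp only: adjf_eval simp_thms)?; rule c6E[OF b4]; rotate_tac -1; (simp only: adjf_eval simp_thms)?; rule c6E[OF b5]; rotate_tac -1; (simp only: adjf_eval simp_thms)?; rule c6E[OF b0]; rotate_tac -1; (simp only: adjf_eval simp_thms)?; rule c6E[OF b1]; rotate_tac -1; (simp only: adjf_eval simp_thms)?; rule c6E[OF b2]; rotate_tac -1; (simp only: adjf_eval simp_thms)?; rule c6E[OF b3]; rotate_tac -1; (simp only: adjf_eval simp_thms)?; auto)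
qed





lemma chain_mono:
  assumes "\<forall>k. Suc k < length bs \<longrightarrow> g (bs ! Suc k) \<subseteq> g (bs ! k)"
  shows "k \<le> m \<Longrightarrow> m < length bs \<Longrightarrow> g (bs ! m) \<subseteq> g (bs ! k)"
proof (induction m)
  case 0 then show ?case by simp
next
  case (Suc m)
  show ?case
  proof (cases "k = Suc m")
    case True then show ?thesis by simp
  next
    case False
    then have "k \<le> m" using Suc.prems by simp
    then have "g (bs ! m) \<subseteq> g (bs ! k)" using Suc by simp
    moreover have "g (bs ! Suc m) \<subseteq> g (bs ! m)" using assms Suc.prems by simp
    ultimately show ?thesis by blast
  qed
qed

locale mans =
  fixes V :: "'a set" and E :: "'a \<Rightarrow> 'a \<Rightarrow> bool" and t :: nat
    and A F X Y :: "'a set" and B C :: "nat \<Rightarrow> 'a set" and j :: nat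
  assumes gr: "graph V E" and t3: "t \<ge> 3"
  and part: "is_partition V ([A, F, X, Y] @ map B [1..<t+1] @ map C [1..<t+1])"
  and Fne: "F \<noteq> {}" and cF: "clique E F" and cX: "clique E X" and cY: "clique E Y"
  and vp: "villa_partition (A \<union> (\<Union>i\<in>{1..t}. B i) \<union> (\<Union>i\<in>{1..t}. C i)) E t A B C"
  and jI: "j \<in> {1..t}"
  and FA: "complete_to E F A"
  and FB: "complete_to E F (\<Union>i\<in>{1..t} - {j}. B i)"
  and FC: "complete_to E F (\<Union>i\<in>{1..t} - {j}. C i)"
  and FBCj: "anticomplete_to E F (B j \<union> C j)"
  and BCj: "complete_to E (B j) (C j)"
  and XAB: "complete_to E X (A \<union> B j)"
  and XB: "anticomplete_to E X (\<Union>i\<in>{1..t} - {j}. B i)"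
  and XC: "anticomplete_to E X (\<Union>i\<in>{1..t}. C i)"
  and FXY: "complete_to E F (X \<union> Y)"
  and XY: "anticomplete_to E X Y"
  and YC: "complete_to E Y (\<Union>i\<in>{1..t}. C i)"
  and YAB: "anticomplete_to E Y (A \<union> (\<Union>i\<in>{1..t}. B i))"
begin

abbreviation "I \<equiv> {1..t}"
definition "Ps = [A, F, X, Y] @ map B [1..<t+1] @ map C [1..<t+1]"

lemma Esym: "E u v \<Longrightarrow> E v u" using gr unfolding graph_def by blast
lemma Eirr: "\<not> E u u" using gr unfolding graph_def by blast
lemma EV: "E u v \<Longrightarrow> u \<in> V \<and> v \<in> V" using gr unfolding graph_def by blast
lemma finV: "finite V" using gr unfolding graph_def by blast

lemma lenPs: "length Ps = 4 + 2*t" by (simp add: Ps_def)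
lemma Ps0: "Ps ! 0 = A" and Ps1: "Ps ! 1 = F" and Ps2: "Ps ! 2 = X" and Ps3: "Ps ! 3 = Y"
  by (simp_all add: Ps_def)
lemma PsB: assumes "i \<in> I" shows "Ps ! (3 + i) = B i"
proof -
  have e: "3 + i = length [A,F,X,Y] + (i - 1)" using assms by simp
  show ?thesis unfolding Ps_def e nth_append_length_plus using assms by (auto simp add: nth_append simp del: upt_Suc)
qed
lemma PsC: assumes "i \<in> I" shows "Ps ! (3 + t + i) = C i"
proof -
  have e: "3 + t + i = length [A,F,X,Y] + (length (map B [1..<t+1]) + (i - 1))" using assms by simp
  show ?thesis unfolding Ps_def e nth_append_length_plus append_assoc using assms by (auto simp add: nth_append simp del: upt_Suc)
qed
lemma dis: "a < 4 + 2*t \<Longrightarrow> b < 4 + 2*t \<Longrightarrow> a \<noteq> b \<Longrightarrow> Ps ! a \<inter> Ps ! b = {}"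
  using part lenPs unfolding is_partition_def Ps_def[symmetric] by auto

lemma Vun: "V = A \<union> F \<union> X \<union> Y \<union> (\<Union>i\<in>I. B i) \<union> (\<Union>i\<in>I. C i)"
proof -
  have "\<Union>(set Ps) = V" using part unfolding is_partition_def Ps_def by simp
  moreover have "set [1..<t+1] = I" by auto
  ultimately show ?thesis unfolding Ps_def by auto
qed

lemma subV: "A \<subseteq> V" "F \<subseteq> V" "X \<subseteq> V" "Y \<subseteq> V" "i \<in> I \<Longrightarrow> B i \<subseteq> V" "i \<in> I \<Longrightarrow> C i \<subseteq> V"
  using Vun by auto

lemma d_AF: "v \<in> A \<Longrightarrow> v \<notin> F" using dis[of 0 1] Ps0 Ps1 by auto
lemma d_AX: "v \<in> A \<Longrightarrow> v \<notin> X" using dis[of 0 2] Ps0 Ps2 by auto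
lemma d_AY: "v \<in> A \<Longrightarrow> v \<notin> Y" using dis[of 0 3] Ps0 Ps3 by auto
lemma d_FX: "v \<in> F \<Longrightarrow> v \<notin> X" using dis[of 1 2] Ps1 Ps2 by auto
lemma d_FY: "v \<in> F \<Longrightarrow> v \<notin> Y" using dis[of 1 3] Ps1 Ps3 by auto
lemma d_XY: "v \<in> X \<Longrightarrow> v \<notin> Y" using dis[of 2 3] Ps2 Ps3 by auto
lemma d_AB: "i \<in> I \<Longrightarrow> v \<in> B i \<Longrightarrow> v \<notin> A" using dis[of 0 "3+i"] Ps0 PsB[of i] by auto
lemma d_FB: "i \<in> I \<Longrightarrow> v \<in> B i \<Longrightarrow> v \<notin> F" using dis[of 1 "3+i"] Ps1 PsB[of i] by auto
lemma d_XB: "i \<in> I \<Longrightarrow> v \<in> B i \<Longrightarrow> v \<notin> X" using dis[of 2 "3+i"] Ps2 PsB[of i] by auto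
lemma d_YB: "i \<in> I \<Longrightarrow> v \<in> B i \<Longrightarrow> v \<notin> Y" using dis[of 3 "3+i"] Ps3 PsB[of i] by auto
lemma d_AC: "i \<in> I \<Longrightarrow> v \<in> C i \<Longrightarrow> v \<notin> A" using dis[of 0 "3+t+i"] Ps0 PsC[of i] by auto
lemma d_FC: "i \<in> I \<Longrightarrow> v \<in> C i \<Longrightarrow> v \<notin> F" using dis[of 1 "3+t+i"] Ps1 PsC[of i] by auto
lemma d_XC: "i \<in> I \<Longrightarrow> v \<in> C i \<Longrightarrow> v \<notin> X" using dis[of 2 "3+t+i"] Ps2 PsC[of i] by auto
lemma d_YC: "i \<in> I \<Longrightarrow> v \<in> C i \<Longrightarrow> v \<notin> Y" using dis[of 3 "3+t+i"] Ps3 PsC[of i] by auto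
lemma d_BB: "i \<in> I \<Longrightarrow> k \<in> I \<Longrightarrow> v \<in> B i \<Longrightarrow> v \<in> B k \<Longrightarrow> i = k"
  using dis[of "3+i" "3+k"] PsB[of i] PsB[of k] by (cases "i = k") auto
lemma d_CC: "i \<in> I \<Longrightarrow> k \<in> I \<Longrightarrow> v \<in> C i \<Longrightarrow> v \<in> C k \<Longrightarrow> i = k"
  using dis[of "3+t+i" "3+t+k"] PsC[of i] PsC[of k] by (cases "i = k") auto
lemma d_BC: "i \<in> I \<Longrightarrow> k \<in> I \<Longrightarrow> v \<in> B i \<Longrightarrow> v \<notin> C k"
  using dis[of "3+i" "3+t+k"] PsB[of i] PsC[of k] by auto

lemma vpD: "A \<noteq> {}" "clique E A"
  "i \<in> I \<Longrightarrow> B i \<noteq> {} \<and> C i \<noteq> {} \<and> clique E (B i) \<and> clique E (C i)"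
  "complete_to E A (\<Union>i\<in>I. B i)" "anticomplete_to E A (\<Union>i\<in>I. C i)"
  "i \<in> I \<Longrightarrow> k \<in> I \<Longrightarrow> i \<noteq> k \<Longrightarrow> anticomplete_to E (B i) (B k) \<and> complete_to E (C i) (C k) \<and> anticomplete_to E (B i) (C k)"
  "i \<in> I \<Longrightarrow> \<exists>bs. distinct bs \<and> set bs = B i \<and>
        nbhd E (hd bs) \<inter> C i = C i \<and> nbhd E (last bs) \<inter> C i \<noteq> {} \<and>
        (\<forall>k. Suc k < length bs \<longrightarrow> nbhd E (bs ! Suc k) \<inter> C i \<subseteq> nbhd E (bs ! k) \<inter> C i)"
  using vp unfolding villa_partition_def by blast+

lemma cl: "clique E S \<Longrightarrow> u \<in> S \<Longrightarrow> v \<in> S \<Longrightarrow> u \<noteq> v \<Longrightarrow> E u v" unfolding clique_def by blast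
lemma ct: "complete_to E S T \<Longrightarrow> u \<in> S \<Longrightarrow> v \<in> T \<Longrightarrow> E u v" unfolding complete_to_def by blast
lemma act: "anticomplete_to E S T \<Longrightarrow> u \<in> S \<Longrightarrow> v \<in> T \<Longrightarrow> \<not> E u v" unfolding anticomplete_to_def by blast

lemma a_AA: "u \<in> A \<Longrightarrow> v \<in> A \<Longrightarrow> u \<noteq> v \<Longrightarrow> E u v" using cl[OF vpD(2)] .
lemma a_FF: "u \<in> F \<Longrightarrow> v \<in> F \<Longrightarrow> u \<noteq> v \<Longrightarrow> E u v" using cl[OF cF] .
lemma a_XX: "u \<in> X \<Longrightarrow> v \<in> X \<Longrightarrow> u \<noteq> v \<Longrightarrow> E u v" using cl[OF cX] .
lemma a_YY: "u \<in> Y \<Longrightarrow> v \<in> Y \<Longrightarrow> u \<noteq> v \<Longrightarrow> E u v" using cl[OF cY] .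
lemma a_BB: "i \<in> I \<Longrightarrow> u \<in> B i \<Longrightarrow> v \<in> B i \<Longrightarrow> u \<noteq> v \<Longrightarrow> E u v" using cl vpD(3) by blast
lemma a_CC: "i \<in> I \<Longrightarrow> u \<in> C i \<Longrightarrow> v \<in> C i \<Longrightarrow> u \<noteq> v \<Longrightarrow> E u v" using cl vpD(3) by blast
lemma a_FA: "u \<in> F \<Longrightarrow> v \<in> A \<Longrightarrow> E u v" using ct[OF FA] .
lemma a_XA: "u \<in> X \<Longrightarrow> v \<in> A \<Longrightarrow> E u v" using ct[OF XAB] by blast
lemma n_YA: "u \<in> Y \<Longrightarrow> v \<in> A \<Longrightarrow> \<not> E u v" using act[OF YAB] by blast
lemma a_AB: "u \<in> A \<Longrightarrow> i \<in> I \<Longrightarrow> v \<in> B i \<Longrightarrow> E u v" using ct[OF vpD(4)] by blast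
lemma n_AC: "u \<in> A \<Longrightarrow> i \<in> I \<Longrightarrow> v \<in> C i \<Longrightarrow> \<not> E u v" using act[OF vpD(5)] by blast
lemma a_FX: "u \<in> F \<Longrightarrow> v \<in> X \<Longrightarrow> E u v" using ct[OF FXY] by blast
lemma a_FY: "u \<in> F \<Longrightarrow> v \<in> Y \<Longrightarrow> E u v" using ct[OF FXY] by blast
lemma a_FB: "u \<in> F \<Longrightarrow> i \<in> I \<Longrightarrow> i \<noteq> j \<Longrightarrow> v \<in> B i \<Longrightarrow> E u v" using ct[OF FB] by blast
lemma n_FB: "u \<in> F \<Longrightarrow> v \<in> B j \<Longrightarrow> \<not> E u v" using act[OF FBCj] by blast
lemma a_FC: "u \<in> F \<Longrightarrow> i \<in> I \<Longrightarrow> i \<noteq> j \<Longrightarrow> v \<in> C i \<Longrightarrow> E u v" using ct[OF FC] by blast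
lemma n_FC: "u \<in> F \<Longrightarrow> v \<in> C j \<Longrightarrow> \<not> E u v" using act[OF FBCj] by blast
lemma n_XY: "u \<in> X \<Longrightarrow> v \<in> Y \<Longrightarrow> \<not> E u v" using act[OF XY] by blast
lemma a_XB: "u \<in> X \<Longrightarrow> v \<in> B j \<Longrightarrow> E u v" using ct[OF XAB] by blast
lemma n_XB: "u \<in> X \<Longrightarrow> i \<in> I \<Longrightarrow> i \<noteq> j \<Longrightarrow> v \<in> B i \<Longrightarrow> \<not> E u v" using act[OF XB] by blast
lemma n_XC: "u \<in> X \<Longrightarrow> i \<in> I \<Longrightarrow> v \<in> C i \<Longrightarrow> \<not> E u v" using act[OF XC] by blast
lemma n_YB: "u \<in> Y \<Longrightarrow> i \<in> I \<Longrightarrow> v \<in> B i \<Longrightarrow> \<not> E u v" using act[OF YAB] by blast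
lemma a_YC: "u \<in> Y \<Longrightarrow> i \<in> I \<Longrightarrow> v \<in> C i \<Longrightarrow> E u v" using ct[OF YC] by blast
lemma n_BB: "i \<in> I \<Longrightarrow> k \<in> I \<Longrightarrow> i \<noteq> k \<Longrightarrow> u \<in> B i \<Longrightarrow> v \<in> B k \<Longrightarrow> \<not> E u v"
  using act vpD(6) by blast
lemma a_CC2: "i \<in> I \<Longrightarrow> k \<in> I \<Longrightarrow> i \<noteq> k \<Longrightarrow> u \<in> C i \<Longrightarrow> v \<in> C k \<Longrightarrow> E u v"
  using ct vpD(6) by blast
lemma n_BC: "i \<in> I \<Longrightarrow> k \<in> I \<Longrightarrow> i \<noteq> k \<Longrightarrow> u \<in> B i \<Longrightarrow> v \<in> C k \<Longrightarrow> \<not> E u v"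
  using act vpD(6) by blast
lemma a_BCj: "u \<in> B j \<Longrightarrow> v \<in> C j \<Longrightarrow> E u v" using ct[OF BCj] .

definition nb :: "nat \<Rightarrow> 'a \<Rightarrow> 'a set" where "nb i b = nbhd E b \<inter> C i"

lemma chainB: "i \<in> I \<Longrightarrow> b \<in> B i \<Longrightarrow> b' \<in> B i \<Longrightarrow> nb i b \<subseteq> nb i b' \<or> nb i b' \<subseteq> nb i b"
proof -
  assume i: "i \<in> I" and b: "b \<in> B i" and b': "b' \<in> B i"
  obtain bs where bs: "set bs = B i"
    "\<forall>k. Suc k < length bs \<longrightarrow> nbhd E (bs ! Suc k) \<inter> C i \<subseteq> nbhd E (bs ! k) \<inter> C i"
    using vpD(7)[OF i] by blast
  have m: "k \<le> m \<Longrightarrow> m < length bs \<Longrightarrow> nb i (bs ! m) \<subseteq> nb i (bs ! k)" for k m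
    using chain_mono[of bs "nb i", OF _ ] bs(2) unfolding nb_def by blast
  obtain k where k: "k < length bs" "bs ! k = b" using b bs(1) by (metis in_set_conv_nth)
  obtain k' where k': "k' < length bs" "bs ! k' = b'" using b' bs(1) by (metis in_set_conv_nth)
  show ?thesis using m[of k k'] m[of k' k] k k' by (cases "k \<le> k'") auto
qed

lemma hdB: "i \<in> I \<Longrightarrow> \<exists>b\<in>B i. C i \<subseteq> nbhd E b"
proof -
  assume i: "i \<in> I"
  obtain bs where bs: "set bs = B i" "nbhd E (hd bs) \<inter> C i = C i"
    using vpD(7)[OF i] by blast
  have "bs \<noteq> []" using bs(1) vpD(3)[OF i] by auto
  then show ?thesis using bs by (metis Int_absorb2 hd_in_set inf.cobounded1 inf.order_iff inf_commute)
qed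

lemma nbB: "i \<in> I \<Longrightarrow> b \<in> B i \<Longrightarrow> \<exists>c\<in>C i. E b c"
proof -
  assume i: "i \<in> I" and b: "b \<in> B i"
  obtain bs where bs: "set bs = B i" "nbhd E (last bs) \<inter> C i \<noteq> {}"
    "\<forall>k. Suc k < length bs \<longrightarrow> nbhd E (bs ! Suc k) \<inter> C i \<subseteq> nbhd E (bs ! k) \<inter> C i"
    using vpD(7)[OF i] by blast
  have m: "k \<le> m \<Longrightarrow> m < length bs \<Longrightarrow> nb i (bs ! m) \<subseteq> nb i (bs ! k)" for k m
    using chain_mono[of bs "nb i", OF _ ] bs(3) unfolding nb_def by blast
  obtain k where k: "k < length bs" "bs ! k = b" using b bs(1) by (metis in_set_conv_nth)
  have ne: "bs \<noteq> []" using k by auto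
  have "last bs = bs ! (length bs - 1)" using ne by (simp add: last_conv_nth)
  then have "nb i (last bs) \<subseteq> nb i b" using m[of k "length bs - 1"] k by auto
  then show ?thesis using bs(2) unfolding nb_def nbhd_def by auto
qed

definition th :: "nat \<Rightarrow> 'a \<Rightarrow> nat" where
  "th i c = Min {card (nb i b) | b. b \<in> B i \<and> E b c}"

lemma rankchar: assumes i: "i \<in> I" and b: "b \<in> B i" and c: "c \<in> C i"
  shows "E b c \<longleftrightarrow> th i c \<le> card (nb i b)"
proof -
  let ?S = "{card (nb i b) | b. b \<in> B i \<and> E b c}"
  have finB: "finite (B i)" using subV(5)[OF i] finV finite_subset by blast
  have fin: "finite ?S" using finB by auto
  obtain h where h: "h \<in> B i" "C i \<subseteq> nbhd E h" using hdB[OF i] by blast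
  have ne: "?S \<noteq> {}" using h c unfolding nbhd_def by blast
  have finC: "finite (C i)" using subV(6)[OF i] finV finite_subset by blast
  show ?thesis
  proof
    assume "E b c"
    then have "card (nb i b) \<in> ?S" using b by blast
    then show "th i c \<le> card (nb i b)" unfolding th_def using fin by simp
  next
    assume le: "th i c \<le> card (nb i b)"
    have "th i c \<in> ?S" unfolding th_def using fin ne by (rule Min_in)
    then obtain b' where b': "b' \<in> B i" "E b' c" "th i c = card (nb i b')" by blast
    have cb': "c \<in> nb i b'" using b' c unfolding nb_def nbhd_def by simp
    have "nb i b' \<subseteq> nb i b"
    proof (cases "nb i b' \<subseteq> nb i b")
      case True then show ?thesis .
    next
      case False
      then have sub: "nb i b \<subseteq> nb i b'" using chainB[OF i b b'(1)] by blast
      have "finite (nb i b')" using finC unfolding nb_def by simp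
      then have "nb i b = nb i b'" using card_seteq[OF _ sub] le b'(3) by simp
      then show ?thesis by simp
    qed
    then show "E b c" using cb' unfolding nb_def nbhd_def by auto
  qed
qed

definition cls :: "'a \<Rightarrow> nat" where
  "cls v = (if v \<in> A then 0 else if v \<in> F then 1 else if v \<in> X then 2 else if v \<in> Y then 3
     else if (\<exists>i\<in>I. v \<in> B i) then 4 else 5)"
definition ix :: "'a \<Rightarrow> nat" where
  "ix v = (if (\<exists>i\<in>I. v \<in> B i) then (THE i. i \<in> I \<and> v \<in> B i) else (THE i. i \<in> I \<and> v \<in> C i))"
definition rkv :: "'a \<Rightarrow> nat" where
  "rkv v = (if cls v = 4 then card (nb (ix v) v) else th (ix v) v)"
definition lab :: "'a \<Rightarrow> nat \<times> nat \<times> nat" where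
  "lab v = (cls v, ix v, rkv v)"

lemma cls_le: "fst (lab v) \<le> 5" unfolding lab_def cls_def by auto

lemma mA: "v \<in> A \<Longrightarrow> cls v = 0" unfolding cls_def by simp
lemma mF: "v \<in> F \<Longrightarrow> cls v = 1" unfolding cls_def using d_AF by auto
lemma mX: "v \<in> X \<Longrightarrow> cls v = 2" unfolding cls_def using d_AX d_FX by auto
lemma mY: "v \<in> Y \<Longrightarrow> cls v = 3" unfolding cls_def using d_AY d_FY d_XY by auto
lemma mB: "i \<in> I \<Longrightarrow> v \<in> B i \<Longrightarrow> cls v = 4 \<and> ix v = i"
proof -
  assume i: "i \<in> I" and v: "v \<in> B i"
  have "(THE i. i \<in> I \<and> v \<in> B i) = i" using i v d_BB by (intro the_equality) auto
  then show ?thesis unfolding cls_def ix_def using i v d_AB d_FB d_XB d_YB by auto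
qed
lemma mC: "i \<in> I \<Longrightarrow> v \<in> C i \<Longrightarrow> cls v = 5 \<and> ix v = i"
proof -
  assume i: "i \<in> I" and v: "v \<in> C i"
  have nb: "\<not> (\<exists>k\<in>I. v \<in> B k)" using d_BC i v by blast
  have "(THE i. i \<in> I \<and> v \<in> C i) = i" using i v d_CC by (intro the_equality) auto
  then show ?thesis unfolding cls_def ix_def using i v d_AC d_FC d_XC d_YC nb by auto
qed

lemma labA: "v \<in> A \<Longrightarrow> lab v = (0, ix v, rkv v)" using mA lab_def by simp
lemma labF: "v \<in> F \<Longrightarrow> lab v = (1, ix v, rkv v)" using mF lab_def by simp
lemma labX: "v \<in> X \<Longrightarrow> lab v = (2, ix v, rkv v)" using mX lab_def by simp
lemma labY: "v \<in> Y \<Longrightarrow> lab v = (3, ix v, rkv v)" using mY lab_def by simp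
lemma labB: "i \<in> I \<Longrightarrow> v \<in> B i \<Longrightarrow> lab v = (4, i, card (nb i v))" using mB lab_def rkv_def by simp
lemma labC: "i \<in> I \<Longrightarrow> v \<in> C i \<Longrightarrow> lab v = (5, i, th i v)" using mC lab_def rkv_def by simp

lemma cases6: "v \<in> V \<Longrightarrow> (v \<in> A \<Longrightarrow> P) \<Longrightarrow> (v \<in> F \<Longrightarrow> P) \<Longrightarrow> (v \<in> X \<Longrightarrow> P) \<Longrightarrow> (v \<in> Y \<Longrightarrow> P)
   \<Longrightarrow> (\<And>i. i \<in> I \<Longrightarrow> v \<in> B i \<Longrightarrow> P) \<Longrightarrow> (\<And>i. i \<in> I \<Longrightarrow> v \<in> C i \<Longrightarrow> P) \<Longrightarrow> P"
  using Vun by blast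

lemma nsym: "\<not> E v u \<Longrightarrow> \<not> E u v" using Esym by blast
lemma adjf_sym: "adjf j p q = adjf j q p" unfolding adjf_def by blast

lemma k_AA: assumes "u \<in> A" "v \<in> A" "u \<noteq> v"
  shows "E u v \<longleftrightarrow> adjf j (lab u) (lab v)"
  unfolding labA[OF assms(1)] labA[OF assms(2)] adjf_eval using a_AA[of u v] assms by auto

lemma k_AF: assumes "u \<in> A" "v \<in> F"
  shows "E u v \<longleftrightarrow> adjf j (lab u) (lab v)"
  unfolding labA[OF assms(1)] labF[OF assms(2)] adjf_eval using Esym[OF a_FA[of v u]] assms by auto

lemma k_AX: assumes "u \<in> A" "v \<in> X"
  shows "E u v \<longleftrightarrow> adjf j (lab u) (lab v)"
  unfolding labA[OF assms(1)] labX[OF assms(2)] adjf_eval using Esym[OF a_XA[of v u]] assms by auto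

lemma k_AY: assumes "u \<in> A" "v \<in> Y"
  shows "E u v \<longleftrightarrow> adjf j (lab u) (lab v)"
  unfolding labA[OF assms(1)] labY[OF assms(2)] adjf_eval using nsym[OF n_YA[of v u]] assms by auto

lemma k_AB: assumes "u \<in> A" "i \<in> I" "v \<in> B i"
  shows "E u v \<longleftrightarrow> adjf j (lab u) (lab v)"
  unfolding labA[OF assms(1)] labB[OF assms(2,3)] adjf_eval using a_AB[of u i v] assms by auto

lemma k_AC: assumes "u \<in> A" "i \<in> I" "v \<in> C i"
  shows "E u v \<longleftrightarrow> adjf j (lab u) (lab v)"
  unfolding labA[OF assms(1)] labC[OF assms(2,3)] adjf_eval using n_AC[of u i v] assms by auto

lemma k_FF: assumes "u \<in> F" "v \<in> F" "u \<noteq> v"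
  shows "E u v \<longleftrightarrow> adjf j (lab u) (lab v)"
  unfolding labF[OF assms(1)] labF[OF assms(2)] adjf_eval using a_FF[of u v] assms by auto

lemma k_FX: assumes "u \<in> F" "v \<in> X"
  shows "E u v \<longleftrightarrow> adjf j (lab u) (lab v)"
  unfolding labF[OF assms(1)] labX[OF assms(2)] adjf_eval using a_FX[of u v] assms by auto

lemma k_FY: assumes "u \<in> F" "v \<in> Y"
  shows "E u v \<longleftrightarrow> adjf j (lab u) (lab v)"
  unfolding labF[OF assms(1)] labY[OF assms(2)] adjf_eval using a_FY[of u v] assms by auto

lemma k_FB: assumes "u \<in> F" "i \<in> I" "v \<in> B i"
  shows "E u v \<longleftrightarrow> adjf j (lab u) (lab v)"
  unfolding labF[OF assms(1)] labB[OF assms(2,3)] adjf_eval using a_FB[of u i v] n_FB[of u v] assms by (cases "i = j") auto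

lemma k_FC: assumes "u \<in> F" "i \<in> I" "v \<in> C i"
  shows "E u v \<longleftrightarrow> adjf j (lab u) (lab v)"
  unfolding labF[OF assms(1)] labC[OF assms(2,3)] adjf_eval using a_FC[of u i v] n_FC[of u v] assms by (cases "i = j") auto

lemma k_XX: assumes "u \<in> X" "v \<in> X" "u \<noteq> v"
  shows "E u v \<longleftrightarrow> adjf j (lab u) (lab v)"
  unfolding labX[OF assms(1)] labX[OF assms(2)] adjf_eval using a_XX[of u v] assms by auto

lemma k_XY: assumes "u \<in> X" "v \<in> Y"
  shows "E u v \<longleftrightarrow> adjf j (lab u) (lab v)"
  unfolding labX[OF assms(1)] labY[OF assms(2)] adjf_eval using n_XY[of u v] assms by auto

lemma k_XB: assumes "u \<in> X" "i \<in> I" "v \<in> B i"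
  shows "E u v \<longleftrightarrow> adjf j (lab u) (lab v)"
  unfolding labX[OF assms(1)] labB[OF assms(2,3)] adjf_eval using a_XB[of u v] n_XB[of u i v] assms by (cases "i = j") auto

lemma k_XC: assumes "u \<in> X" "i \<in> I" "v \<in> C i"
  shows "E u v \<longleftrightarrow> adjf j (lab u) (lab v)"
  unfolding labX[OF assms(1)] labC[OF assms(2,3)] adjf_eval using n_XC[of u i v] assms by auto

lemma k_YY: assumes "u \<in> Y" "v \<in> Y" "u \<noteq> v"
  shows "E u v \<longleftrightarrow> adjf j (lab u) (lab v)"
  unfolding labY[OF assms(1)] labY[OF assms(2)] adjf_eval using a_YY[of u v] assms by auto

lemma k_YB: assumes "u \<in> Y" "i \<in> I" "v \<in> B i"
  shows "E u v \<longleftrightarrow> adjf j (lab u) (lab v)"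
  unfolding labY[OF assms(1)] labB[OF assms(2,3)] adjf_eval using n_YB[of u i v] assms by auto

lemma k_YC: assumes "u \<in> Y" "i \<in> I" "v \<in> C i"
  shows "E u v \<longleftrightarrow> adjf j (lab u) (lab v)"
  unfolding labY[OF assms(1)] labC[OF assms(2,3)] adjf_eval using a_YC[of u i v] assms by auto

lemma k_BB: assumes "i \<in> I" "u \<in> B i" "k \<in> I" "v \<in> B k" "u \<noteq> v"
  shows "E u v \<longleftrightarrow> adjf j (lab u) (lab v)"
proof -
  have l: "adjf j (lab u) (lab v) = (i = k \<or> k = i)"
    unfolding labB[OF assms(1,2)] labB[OF assms(3,4)] by (rule adjf_4_4)
  show ?thesis unfolding l using a_BB[of i u v] n_BB[of i k u v] assms by (cases "i = k") auto
qed
lemma k_BC: assumes "i \<in> I" "u \<in> B i" "k \<in> I" "v \<in> C k"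
  shows "E u v \<longleftrightarrow> adjf j (lab u) (lab v)"
proof -
  have l: "adjf j (lab u) (lab v) = (i = k \<and> (i = j \<or> th k v \<le> card (nb i u)))"
    unfolding labB[OF assms(1,2)] labC[OF assms(3,4)] by (rule adjf_4_5)
  show ?thesis unfolding l using n_BC[of i k u v] a_BCj[of u v] rankchar[of i u v] assms
    by (cases "i = k"; cases "i = j") auto
qed

lemma k_CC: assumes "i \<in> I" "u \<in> C i" "k \<in> I" "v \<in> C k" "u \<noteq> v"
  shows "E u v \<longleftrightarrow> adjf j (lab u) (lab v)"
  unfolding labC[OF assms(1,2)] labC[OF assms(3,4)] adjf_eval using a_CC[of i u v] a_CC2[of i k u v] assms by (cases "i = k") auto

lemmas kfw = k_AA k_AF k_AX k_AY k_AB k_AC k_FF k_FX k_FY k_FB k_FC k_XX k_XY k_XB k_XC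
  k_YY k_YB k_YC k_BB k_BC k_CC

lemma kbw: "(E v u \<longleftrightarrow> adjf j (lab v) (lab u)) \<Longrightarrow> (E u v \<longleftrightarrow> adjf j (lab u) (lab v))"
  using Esym adjf_sym by blast

lemma keyE: assumes u: "u \<in> V" and v: "v \<in> V" and uv: "u \<noteq> v"
  shows "E u v \<longleftrightarrow> adjf j (lab u) (lab v)"
proof -
  have uv': "v \<noteq> u" using uv by simp
  show ?thesis
  proof (rule cases6[OF u])
    assume hu: "u \<in> A"
    show ?thesis
    proof (rule cases6[OF v])
      assume hv: "v \<in> A"
      show ?thesis by (rule k_AA[OF hu hv uv])
    next
      assume hv: "v \<in> F"
      show ?thesis by (rule k_AF[OF hu hv])
    next
      assume hv: "v \<in> X"
      show ?thesis by (rule k_AX[OF hu hv])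
    next
      assume hv: "v \<in> Y"
      show ?thesis by (rule k_AY[OF hu hv])
    next
      fix k assume hvi: "k \<in> I" and hv: "v \<in> B k"
      show ?thesis by (rule k_AB[OF hu hvi hv])
    next
      fix k assume hvi: "k \<in> I" and hv: "v \<in> C k"
      show ?thesis by (rule k_AC[OF hu hvi hv])
    qed
  next
    assume hu: "u \<in> F"
    show ?thesis
    proof (rule cases6[OF v])
      assume hv: "v \<in> A"
      show ?thesis by (rule kbw[OF k_AF[OF hv hu]])
    next
      assume hv: "v \<in> F"
      show ?thesis by (rule k_FF[OF hu hv uv])
    next
      assume hv: "v \<in> X"
      show ?thesis by (rule k_FX[OF hu hv])
    next
      assume hv: "v \<in> Y"
      show ?thesis by (rule k_FY[OF hu hv])
    next
      fix k assume hvi: "k \<in> I" and hv: "v \<in> B k"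
      show ?thesis by (rule k_FB[OF hu hvi hv])
    next
      fix k assume hvi: "k \<in> I" and hv: "v \<in> C k"
      show ?thesis by (rule k_FC[OF hu hvi hv])
    qed
  next
    assume hu: "u \<in> X"
    show ?thesis
    proof (rule cases6[OF v])
      assume hv: "v \<in> A"
      show ?thesis by (rule kbw[OF k_AX[OF hv hu]])
    next
      assume hv: "v \<in> F"
      show ?thesis by (rule kbw[OF k_FX[OF hv hu]])
    next
      assume hv: "v \<in> X"
      show ?thesis by (rule k_XX[OF hu hv uv])
    next
      assume hv: "v \<in> Y"
      show ?thesis by (rule k_XY[OF hu hv])
    next
      fix k assume hvi: "k \<in> I" and hv: "v \<in> B k"
      show ?thesis by (rule k_XB[OF hu hvi hv])
    next
      fix k assume hvi: "k \<in> I" and hv: "v \<in> C k"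
      show ?thesis by (rule k_XC[OF hu hvi hv])
    qed
  next
    assume hu: "u \<in> Y"
    show ?thesis
    proof (rule cases6[OF v])
      assume hv: "v \<in> A"
      show ?thesis by (rule kbw[OF k_AY[OF hv hu]])
    next
      assume hv: "v \<in> F"
      show ?thesis by (rule kbw[OF k_FY[OF hv hu]])
    next
      assume hv: "v \<in> X"
      show ?thesis by (rule kbw[OF k_XY[OF hv hu]])
    next
      assume hv: "v \<in> Y"
      show ?thesis by (rule k_YY[OF hu hv uv])
    next
      fix k assume hvi: "k \<in> I" and hv: "v \<in> B k"
      show ?thesis by (rule k_YB[OF hu hvi hv])
    next
      fix k assume hvi: "k \<in> I" and hv: "v \<in> C k"
      show ?thesis by (rule k_YC[OF hu hvi hv])
    qed
  next
    fix i assume hui: "i \<in> I" and hu: "u \<in> B i"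
    show ?thesis
    proof (rule cases6[OF v])
      assume hv: "v \<in> A"
      show ?thesis by (rule kbw[OF k_AB[OF hv hui hu]])
    next
      assume hv: "v \<in> F"
      show ?thesis by (rule kbw[OF k_FB[OF hv hui hu]])
    next
      assume hv: "v \<in> X"
      show ?thesis by (rule kbw[OF k_XB[OF hv hui hu]])
    next
      assume hv: "v \<in> Y"
      show ?thesis by (rule kbw[OF k_YB[OF hv hui hu]])
    next
      fix k assume hvi: "k \<in> I" and hv: "v \<in> B k"
      show ?thesis by (rule k_BB[OF hui hu hvi hv uv])
    next
      fix k assume hvi: "k \<in> I" and hv: "v \<in> C k"
      show ?thesis by (rule k_BC[OF hui hu hvi hv])
    qed
  next
    fix i assume hui: "i \<in> I" and hu: "u \<in> C i"
    show ?thesis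
    proof (rule cases6[OF v])
      assume hv: "v \<in> A"
      show ?thesis by (rule kbw[OF k_AC[OF hv hui hu]])
    next
      assume hv: "v \<in> F"
      show ?thesis by (rule kbw[OF k_FC[OF hv hui hu]])
    next
      assume hv: "v \<in> X"
      show ?thesis by (rule kbw[OF k_XC[OF hv hui hu]])
    next
      assume hv: "v \<in> Y"
      show ?thesis by (rule kbw[OF k_YC[OF hv hui hu]])
    next
      fix k assume hvi: "k \<in> I" and hv: "v \<in> B k"
      show ?thesis by (rule kbw[OF k_BC[OF hvi hv hui hu]])
    next
      fix k assume hvi: "k \<in> I" and hv: "v \<in> C k"
      show ?thesis by (rule k_CC[OF hui hu hvi hv uv])
    qed
  qed
qed




lemma lab_free: assumes "has_induced V E VH EH"
  shows "\<exists>L. (\<forall>x\<in>VH. \<forall>y\<in>VH. x \<noteq> y \<longrightarrow> (EH x y \<longleftrightarrow> adjf j (L x) (L y))) \<and> (\<forall>x\<in>VH. fst (L x) \<le> 5)"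
proof -
  obtain f where f: "inj_on f VH" "f ` VH \<subseteq> V" "\<forall>x\<in>VH. \<forall>y\<in>VH. E (f x) (f y) \<longleftrightarrow> EH x y"
    using assms unfolding has_induced_def by blast
  have "\<forall>x\<in>VH. \<forall>y\<in>VH. x \<noteq> y \<longrightarrow> (EH x y \<longleftrightarrow> adjf j (lab (f x)) (lab (f y)))"
  proof (intro ballI impI)
    fix x y assume x: "x \<in> VH" and y: "y \<in> VH" and xy: "x \<noteq> y"
    have ne: "f x \<noteq> f y" using f(1) x y xy by (meson inj_on_def)
    then show "EH x y \<longleftrightarrow> adjf j (lab (f x)) (lab (f y))"
      using keyE[of "f x" "f y"] f(2,3) x y by auto
  qed
  then show ?thesis using cls_le by (intro exI[of _ "\<lambda>x. lab (f x)"]) auto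
qed

lemma t2: "1 \<in> I" "2 \<in> I" using t3 by auto
definition oth :: "nat \<Rightarrow> nat" where "oth i = (if i = 1 then 2 else 1)"
lemma oth: "oth i \<in> I" "oth i \<noteq> i" unfolding oth_def using t2 by auto

definition "a0 = (SOME a. a \<in> A)"
definition "f0 = (SOME a. a \<in> F)"
definition "hb i = (SOME b. b \<in> B i \<and> C i \<subseteq> nbhd E b)"
definition "cc i = (SOME c. c \<in> C i)"
lemma a0: "a0 \<in> A" unfolding a0_def using vpD(1) by (simp add: some_in_eq)
lemma f0: "f0 \<in> F" unfolding f0_def using Fne by (simp add: some_in_eq)
lemma hb: "i \<in> I \<Longrightarrow> hb i \<in> B i \<and> C i \<subseteq> nbhd E (hb i)"
  unfolding hb_def using hdB by (metis (mono_tags, lifting) someI_ex)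
lemma cc: "i \<in> I \<Longrightarrow> cc i \<in> C i"
  unfolding cc_def using vpD(3) by (simp add: some_in_eq)
lemma hbE: "i \<in> I \<Longrightarrow> c \<in> C i \<Longrightarrow> E (hb i) c"
  using hb unfolding nbhd_def by blast

lemma no_simp_univ: assumes v: "v \<in> V" shows "\<not> simplicial V E v \<and> \<not> universal V E v"
proof -
  have "(\<exists>p q. E v p \<and> E v q \<and> p \<in> V \<and> q \<in> V \<and> p \<noteq> q \<and> \<not> E p q) \<and> (\<exists>u\<in>V. u \<noteq> v \<and> \<not> E v u)"
  proof (rule cases6[OF v])
    assume h: "v \<in> A"
    have b1: "hb 1 \<in> B 1" and b2: "hb 2 \<in> B 2" using hb t2 by auto
    have ne: "hb 1 \<noteq> hb 2" using d_BB[OF t2 b1] b2 by auto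
    have s1: "\<exists>p q. E v p \<and> E v q \<and> p \<in> V \<and> q \<in> V \<and> p \<noteq> q \<and> \<not> E p q"
      proof (rule exI[of _ "hb 1"], rule exI[of _ "hb 2"], intro conjI) qed (use ne a_AB[OF h t2(1) b1] a_AB[OF h t2(2) b2] n_BB[OF t2 _ b1 b2] subV(5)[OF t2(1)] subV(5)[OF t2(2)] b1 b2 in auto)
    have c1: "cc 1 \<in> C 1" using cc t2 by auto
    have s2: "\<exists>u\<in>V. u \<noteq> v \<and> \<not> E v u"
      proof (intro bexI[of _ "cc 1"] conjI) qed (use n_AC[OF h t2(1) c1] subV(6)[OF t2(1)] c1 d_AC[OF t2(1) c1] h in auto)
    show ?thesis using s1 s2 by blast
  next
    assume h: "v \<in> F"
    have oi: "oth j \<in> I" "oth j \<noteq> j" using oth by auto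
    have c: "cc (oth j) \<in> C (oth j)" using cc oth by auto
    have ne: "a0 \<noteq> cc (oth j)" using d_AC[OF oi(1) c] a0 by auto
    have s1: "\<exists>p q. E v p \<and> E v q \<and> p \<in> V \<and> q \<in> V \<and> p \<noteq> q \<and> \<not> E p q"
      proof (rule exI[of _ "a0"], rule exI[of _ "cc (oth j)"], intro conjI) qed (use ne a_FA[OF h a0] a_FC[OF h oi(1) oi(2) c] n_AC[OF a0 oi(1) c] subV(1) subV(6)[OF oi(1)] a0 c in auto)
    have b: "hb j \<in> B j" using hb jI by auto
    have s2: "\<exists>u\<in>V. u \<noteq> v \<and> \<not> E v u"
      proof (intro bexI[of _ "hb j"] conjI) qed (use n_FB[OF h b] subV(5)[OF jI] b d_FB[OF jI b] h in auto)
    show ?thesis using s1 s2 by blast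
  next
    assume h: "v \<in> X"
    have b: "hb j \<in> B j" using hb jI by auto
    have ne: "f0 \<noteq> hb j" using d_FB[OF jI b] f0 by auto
    have s1: "\<exists>p q. E v p \<and> E v q \<and> p \<in> V \<and> q \<in> V \<and> p \<noteq> q \<and> \<not> E p q"
      proof (rule exI[of _ "f0"], rule exI[of _ "hb j"], intro conjI) qed (use ne Esym[OF a_FX[OF f0 h]] a_XB[OF h b] n_FB[OF f0 b] subV(2) subV(5)[OF jI] f0 b in auto)
    have c1: "cc 1 \<in> C 1" using cc t2 by auto
    have s2: "\<exists>u\<in>V. u \<noteq> v \<and> \<not> E v u"
      proof (intro bexI[of _ "cc 1"] conjI) qed (use n_XC[OF h t2(1) c1] subV(6)[OF t2(1)] c1 d_XC[OF t2(1) c1] h in auto)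
    show ?thesis using s1 s2 by blast
  next
    assume h: "v \<in> Y"
    have c: "cc j \<in> C j" using cc jI by auto
    have ne: "f0 \<noteq> cc j" using d_FC[OF jI c] f0 by auto
    have s1: "\<exists>p q. E v p \<and> E v q \<and> p \<in> V \<and> q \<in> V \<and> p \<noteq> q \<and> \<not> E p q"
      proof (rule exI[of _ "f0"], rule exI[of _ "cc j"], intro conjI) qed (use ne Esym[OF a_FY[OF f0 h]] a_YC[OF h jI c] n_FC[OF f0 c] subV(2) subV(6)[OF jI] f0 c in auto)
    have s2: "\<exists>u\<in>V. u \<noteq> v \<and> \<not> E v u"
      proof (intro bexI[of _ "a0"] conjI) qed (use n_YA[OF h a0] subV(1) a0 d_AY[OF a0] h in auto)
    show ?thesis using s1 s2 by blast
  next
    fix i assume i: "i \<in> I" and h: "v \<in> B i"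
    have oi: "oth i \<in> I" "oth i \<noteq> i" using oth by auto
    obtain c where c: "c \<in> C i" "E v c" using nbB[OF i h] by blast
    have ne: "a0 \<noteq> c" using d_AC[OF i c(1)] a0 by auto
    have s1: "\<exists>p q. E v p \<and> E v q \<and> p \<in> V \<and> q \<in> V \<and> p \<noteq> q \<and> \<not> E p q"
      proof (rule exI[of _ "a0"], rule exI[of _ "c"], intro conjI) qed (use ne Esym[OF a_AB[OF a0 i h]] c n_AC[OF a0 i c(1)] subV(1) subV(6)[OF i] a0 in auto)
    have b: "hb (oth i) \<in> B (oth i)" using hb oth by auto
    have ne: "hb (oth i) \<noteq> v" using d_BB[OF i oi(1) h] b oi(2) by auto
    have s2: "\<exists>u\<in>V. u \<noteq> v \<and> \<not> E v u"
      proof (intro bexI[of _ "hb (oth i)"] conjI) qed (use ne n_BB[OF i oi(1) _ h b] oi(2) subV(5)[OF oi(1)] b in auto)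
    show ?thesis using s1 s2 by blast
  next
    fix i assume i: "i \<in> I" and h: "v \<in> C i"
    have oi: "oth i \<in> I" "oth i \<noteq> i" using oth by auto
    have b: "hb i \<in> B i" using hb i by auto
    have c: "cc (oth i) \<in> C (oth i)" using cc oth by auto
    have ne: "hb i \<noteq> cc (oth i)" using d_BC[OF i oi(1) b] c by auto
    have ne2: "v \<noteq> cc (oth i)" using d_CC[OF i oi(1) h] c oi(2) by auto
    have s1: "\<exists>p q. E v p \<and> E v q \<and> p \<in> V \<and> q \<in> V \<and> p \<noteq> q \<and> \<not> E p q"
      proof (rule exI[of _ "hb i"], rule exI[of _ "cc (oth i)"], intro conjI) qed (use ne ne2 Esym[OF hbE[OF i h]] a_CC2[OF i oi(1) _ h c] oi(2) n_BC[OF i oi(1) _ b c]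
        subV(5)[OF i] subV(6)[OF oi(1)] b c in auto)
    have ne: "a0 \<noteq> v" using d_AC[OF i h] a0 by auto
    have s2: "\<exists>u\<in>V. u \<noteq> v \<and> \<not> E v u"
      proof (intro bexI[of _ "a0"] conjI) qed (use ne nsym[OF n_AC[OF a0 i h]] subV(1) a0 in auto)
    show ?thesis using s1 s2 by blast
  qed
  then show ?thesis unfolding simplicial_def universal_def clique_def nbhd_def by blast
qed


definition "S u v = (u \<in> V \<and> v \<in> V \<and> complement V E u v)"

lemma Sstep: "u \<in> V \<Longrightarrow> v \<in> V \<Longrightarrow> u \<noteq> v \<Longrightarrow> \<not> E u v \<Longrightarrow> S u v"
  unfolding S_def complement_def by auto
lemma Ssym: "S u v \<Longrightarrow> S v u" unfolding S_def complement_def using Esym by blast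
lemma Srev: "S\<^sup>*\<^sup>* x y \<Longrightarrow> S\<^sup>*\<^sup>* y x"
proof (induction rule: rtranclp_induct)
  case base then show ?case by simp
next
  case (step y z)
  then show ?case using Ssym converse_rtranclp_into_rtranclp by metis
qed

lemma two: "S x w \<Longrightarrow> S w y \<Longrightarrow> S\<^sup>*\<^sup>* x y" by auto

lemma toa0: assumes v: "v \<in> V" shows "S\<^sup>*\<^sup>* v a0"
proof (rule cases6[OF v])
  have a0V: "a0 \<in> V" using a0 subV by auto
  have c1: "cc 1 \<in> C 1" "cc 1 \<in> V" using cc[OF t2(1)] subV(6)[OF t2(1)] by auto
  have ca: "S (cc 1) a0" using Sstep[OF c1(2) a0V] d_AC[OF t2(1) c1(1)] a0 nsym[OF n_AC[OF a0 t2(1) c1(1)]] by metis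
  {
    assume h: "v \<in> A"
    show ?thesis
    proof (cases "v = a0")
      case True then show ?thesis by simp
    next
      case False
      have "S v (cc 1)" using Sstep[OF v c1(2)] d_AC[OF t2(1) c1(1)] h n_AC[OF h t2(1) c1(1)] by metis
      then show ?thesis using ca by auto
    qed
  }
  {
    assume h: "v \<in> F"
    have c: "cc j \<in> C j" "cc j \<in> V" using cc[OF jI] subV(6)[OF jI] by auto
    have "S v (cc j)" using Sstep[OF v c(2)] d_FC[OF jI c(1)] h n_FC[OF h c(1)] by metis
    moreover have "S (cc j) a0" using Sstep[OF c(2) a0V] d_AC[OF jI c(1)] a0 nsym[OF n_AC[OF a0 jI c(1)]] by metis
    ultimately show ?thesis by auto
  }
  {
    assume h: "v \<in> X"
    have "S v (cc 1)" using Sstep[OF v c1(2)] d_XC[OF t2(1) c1(1)] h n_XC[OF h t2(1) c1(1)] by metis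
    then show ?thesis using ca by auto
  }
  {
    assume h: "v \<in> Y"
    have "S v a0" using Sstep[OF v a0V] d_AY[OF a0] h n_YA[OF h a0] by metis
    then show ?thesis by auto
  }
  {
    fix i assume i: "i \<in> I" and h: "v \<in> B i"
    have oi: "oth i \<in> I" "oth i \<noteq> i" using oth by auto
    have c: "cc (oth i) \<in> C (oth i)" "cc (oth i) \<in> V" using cc[OF oi(1)] subV(6)[OF oi(1)] by auto
    have "S v (cc (oth i))" using Sstep[OF v c(2)] d_BC[OF i oi(1) h] c(1) n_BC[OF i oi(1) _ h c(1)] oi(2) by metis
    moreover have "S (cc (oth i)) a0" using Sstep[OF c(2) a0V] d_AC[OF oi(1) c(1)] a0 nsym[OF n_AC[OF a0 oi(1) c(1)]] by metis
    ultimately show ?thesis by auto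
  }
  {
    fix i assume i: "i \<in> I" and h: "v \<in> C i"
    have "S v a0" using Sstep[OF v a0V] d_AC[OF i h] a0 nsym[OF n_AC[OF a0 i h]] by metis
    then show ?thesis by auto
  }
qed

lemma anticon: "anticonnected V E"
  unfolding anticonnected_def connected_graph_def
proof (intro ballI)
  fix x y assume x: "x \<in> V" and y: "y \<in> V"
  have "S\<^sup>*\<^sup>* x y" using toa0[OF x] Srev[OF toa0[OF y]] by (meson rtranclp_trans)
  moreover have "S = (\<lambda>u v. u \<in> V \<and> v \<in> V \<and> complement V E u v)" unfolding S_def by (intro ext) simp
  ultimately show "(\<lambda>u v. u \<in> V \<and> v \<in> V \<and> complement V E u v)\<^sup>*\<^sup>* x y" by simp
qed

definition pf :: "nat \<times> nat \<Rightarrow> 'a" where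
  "pf x = (if fst x = 0 then a0 else if fst x = 1 then hb (snd x) else cc (snd x))"

lemma pmem: "x \<in> pentV t \<Longrightarrow> (x = (0,0) \<and> pf x \<in> A) \<or> (\<exists>i\<in>I. x = (1,i) \<and> pf x \<in> B i) \<or> (\<exists>i\<in>I. x = (2,i) \<and> pf x \<in> C i)"
  unfolding pentV_def pf_def using a0 hb cc by auto

lemma pentE_cases:
  "pentE t (0,0) (0,0) = False"
  "i \<in> I \<Longrightarrow> pentE t (0,0) (1,i) = True"
  "i \<in> I \<Longrightarrow> pentE t (1,i) (0,0) = True"
  "i \<in> I \<Longrightarrow> pentE t (0,0) (2,i) = False"
  "i \<in> I \<Longrightarrow> pentE t (2,i) (0,0) = False"
  "i \<in> I \<Longrightarrow> k \<in> I \<Longrightarrow> pentE t (1,i) (1,k) = False"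
  "i \<in> I \<Longrightarrow> k \<in> I \<Longrightarrow> pentE t (1,i) (2,k) = (i = k)"
  "i \<in> I \<Longrightarrow> k \<in> I \<Longrightarrow> pentE t (2,i) (1,k) = (i = k)"
  "i \<in> I \<Longrightarrow> k \<in> I \<Longrightarrow> pentE t (2,i) (2,k) = (i \<noteq> k)"
  unfolding pentE_def pentV_def by (auto simp: doubleton_eq_iff)

lemma pent: "has_induced V E (pentV t) (pentE t)"
  unfolding has_induced_def
proof (intro exI[of _ pf] conjI)
  show "pf ` pentV t \<subseteq> V" using pmem subV by blast
  show "inj_on pf (pentV t)"
  proof (rule inj_onI)
    fix x y assume x: "x \<in> pentV t" and y: "y \<in> pentV t" and e: "pf x = pf y"
    show "x = y" using pmem[OF x] pmem[OF y] e d_AB d_AC d_BB d_CC d_BC by metis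
  qed
  show "\<forall>x\<in>pentV t. \<forall>y\<in>pentV t. E (pf x) (pf y) = pentE t x y"
  proof (intro ballI)
    fix x y assume x: "x \<in> pentV t" and y: "y \<in> pentV t"
    show "E (pf x) (pf y) = pentE t x y"
      using pmem[OF x]
    proof (elim disjE exE conjE bexE)
      assume x0: "x = (0,0)" and xa: "pf x \<in> A"
      show ?thesis using pmem[OF y]
      proof (elim disjE exE conjE bexE)
        assume "y = (0,0)" then show ?thesis using x0 Eirr pentE_cases(1) by simp
      next
        fix k assume "k \<in> I" "y = (1,k)" "pf y \<in> B k"
        then show ?thesis using x0 xa a_AB pentE_cases(2) by simp
      next
        fix k assume "k \<in> I" "y = (2,k)" "pf y \<in> C k"
        then show ?thesis using x0 xa n_AC pentE_cases(4) by simp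
      qed
    next
      fix i assume i: "i \<in> I" and x1: "x = (1,i)" and xb: "pf x \<in> B i"
      show ?thesis using pmem[OF y]
      proof (elim disjE exE conjE bexE)
        assume "y = (0,0)" "pf y \<in> A" then show ?thesis using x1 xb i Esym[OF a_AB] pentE_cases(3) by simp
      next
        fix k assume k: "k \<in> I" "y = (1,k)" "pf y \<in> B k"
        show ?thesis
        proof (cases "i = k")
          case True then show ?thesis using x1 k Eirr pentE_cases(6) i by simp
        next
          case False then show ?thesis using x1 k xb i n_BB pentE_cases(6) by simp
        qed
      next
        fix k assume k: "k \<in> I" "y = (2,k)" "pf y \<in> C k"
        show ?thesis
        proof (cases "i = k")
          case True then show ?thesis using x1 k i hbE pentE_cases(7) unfolding pf_def by simp
        next
          case False then show ?thesis using x1 k xb i n_BC pentE_cases(7) by simp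
        qed
      qed
    next
      fix i assume i: "i \<in> I" and x2: "x = (2,i)" and xc: "pf x \<in> C i"
      show ?thesis using pmem[OF y]
      proof (elim disjE exE conjE bexE)
        assume "y = (0,0)" "pf y \<in> A" then show ?thesis using x2 xc i nsym[OF n_AC] pentE_cases(5) by simp
      next
        fix k assume k: "k \<in> I" "y = (1,k)" "pf y \<in> B k"
        show ?thesis
        proof (cases "i = k")
          case True then show ?thesis using x2 k i Esym[OF hbE[OF i cc[OF i]]] pentE_cases(8) unfolding pf_def by simp
        next
          case False then show ?thesis using x2 k xc i nsym[OF n_BC] pentE_cases(8) by simp
        qed
      next
        fix k assume k: "k \<in> I" "y = (2,k)" "pf y \<in> C k"
        show ?thesis
        proof (cases "i = k")
          case True then show ?thesis using x2 k Eirr pentE_cases(9) i by simp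
        next
          case False then show ?thesis using x2 k xc i a_CC2 pentE_cases(9) by simp
        qed
      qed
    qed
  qed
qed


lemma free_of: "(\<And>L. \<forall>x\<in>VH. \<forall>y\<in>VH. x \<noteq> y \<longrightarrow> (EH x y \<longleftrightarrow> adjf j (L x) (L y)) \<Longrightarrow> \<forall>x\<in>VH. fst (L x) \<le> 5 \<Longrightarrow> False) \<Longrightarrow> \<not> has_induced V E VH EH"
  using lab_free by blast

end

theorem proposition5p4:
  fixes V :: "'a set" and E :: "'a \<Rightarrow> 'a \<Rightarrow> bool" and t :: nat
  assumes "t \<ge> 3" and "mansion V E t"
  shows "\<not> has_induced V E twoP3V twoP3E \<and>
         \<not> has_induced V E (cycV 4) (cycE 4) \<and>
         \<not> has_induced V E (cycV 6) (cycE 6) \<and>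
         \<not> has_induced V E (cycV 7) (cycE 7) \<and>
         \<not> has_induced V E T0V T0E \<and>
         has_induced V E (pentV t) (pentE t) \<and>
         anticonnected V E \<and>
         (\<forall>v\<in>V. \<not> simplicial V E v \<and> \<not> universal V E v)"
proof -
  obtain A B C F X Y j where m: "mans V E t A F X Y B C j"
    using assms unfolding mansion_def mans_def by blast
  interpret mans V E t A F X Y B C j by (rule m)
  have 1: "\<not> has_induced V E twoP3V twoP3E"
    apply (rule free_of) apply (erule (1) no2P3) done
  have 2: "\<not> has_induced V E (cycV 4) (cycE 4)"
    apply (rule free_of) apply (erule (1) noC4) done
  have 3: "\<not> has_induced V E (cycV 6) (cycE 6)"
    apply (rule free_of) apply (erule (1) noC6) done
  have 4: "\<not> has_induced V E (cycV 7) (cycE 7)"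
    apply (rule free_of) apply (erule (1) noC7) done
  have 5: "\<not> has_induced V E T0V T0E"
    apply (rule free_of) apply (erule (1) noT0) done
  show ?thesis using 1 2 3 4 5 pent anticon no_simp_univ by blast
qed

end
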